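(* Let $\mathbf f=(f_1,\dots,f_n)\in\mathcal{GEN}_n$ and let $R$ be a tournament on $[n+1]$ whose restriction to $[n]$ is $R[\mathbf f]$. For $f_{n+1}\in\mathcal G_0$ write $\mathbf f'=(f_1,\dots,f_n,f_{n+1})$. (a) The set $\{f_{n+1}\in\mathcal G_0:\mathbf f'\in\mathcal{GEN}_{n+1}\}$ is open and dense in $\mathcal G_0$. If $\mathbf f\in\mathcal{GEN}_n^+$, then $\{f_{n+1}\in\mathcal G_0:\mathbf f'\in\mathcal{GEN}_{n+1}^+\}$ is open and dense in $\mathcal G_0$. (b) The set $\{f_{n+1}\in\mathcal G_0:\mathbf f'\in\mathcal{GEN}_{n+1},\ R[\mathbf f']=R\}$ is open and nonempty in $\mathcal G_0$. (c) If $\mathbf f\in\mathcal{GEN}_n^+$, then $\{f_{n+1}\in\mathcal G_0:\mathbf f'\in\mathcal{GEN}_{n+1}^+,\ R[\mathbf f']=R\}$ is open and nonempty in $\mathcal G_0$.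
   Context: Let $\mathcal G$ be the group of strictly increasing continuous maps $f:[-1,1]\to[-1,1]$ with $f(\pm1)=\pm1$, with the sup-norm topology; $i$ is the identity; $\mathcal G_0=\{f\in\mathcal G:\int_{-1}^1 f=0\}$. $f^e(t)=\tfrac12(f(t)+f(-t))$. For $f,g\in\mathcal G$, $Q(f,g)=\int_{-1}^1 f(g^{-1}(t))\,dt$. For $\mathbf f=(f_1,\dots,f_n)\in\mathcal G^n$, $R[\mathbf f]$ is the digraph on $[n]$ with $(i,j)\in R[\mathbf f]$ iff $Q(f_j,f_i)>0$. A tournament on $I$ is a subset of $I\times I$ containing no diagonal pair and exactly one of $(i,j),(j,i)$ for each distinct $i,j$. $\mathcal{GEN}_n$ (generic $n$-tuples) is the set of $\mathbf f\in\mathcal G_0^n$ with $\{i,f_1,\dots,f_n\}$ linearly independent and $Q(f_i,f_j)\neq0$ for all $i\neq j$; $\mathcal{GEN}_n^+$ (strongly generic) is the set of $\mathbf f\in\mathcal G_0^n$ with $\{f_1^e,\dots,f_n^e\}$ linearly independent and $Q(f_i,f_j)\ne0$ for all $i\ne j$. *)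

theory Defs
  imports "HOL-Analysis.Analysis"
begin

text \<open>Functions are represented as real \<Rightarrow> real, with the
  normalising convention that they are the identity outside [-1,1], so that
  G is in bijection with the paper's group.\<close>
definition Gset :: "(real \<Rightarrow> real) set" where
  "Gset = {f. continuous_on {-1..1} f \<and> strict_mono_on {-1..1} f
              \<and> f ` {-1..1} \<subseteq> {-1..1} \<and> f (-1) = -1 \<and> f 1 = 1
              \<and> (\<forall>t. t \<notin> {-1..1} \<longrightarrow> f t = t)}"

definition G0 :: "(real \<Rightarrow> real) set" where
  "G0 = {f \<in> Gset. integral {-1..1} f = 0}"

definition supdist :: "(real \<Rightarrow> real) \<Rightarrow> (real \<Rightarrow> real) \<Rightarrow> real" where
  "supdist f g = (SUP t\<in>{-1..1}. \<bar>f t - g t\<bar>)"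

definition open_in_G0 :: "(real \<Rightarrow> real) set \<Rightarrow> bool" where
  "open_in_G0 S \<longleftrightarrow> S \<subseteq> G0 \<and>
     (\<forall>f\<in>S. \<exists>e>0. \<forall>g\<in>G0. supdist f g < e \<longrightarrow> g \<in> S)"

definition dense_in_G0 :: "(real \<Rightarrow> real) set \<Rightarrow> bool" where
  "dense_in_G0 S \<longleftrightarrow> (\<forall>f\<in>G0. \<forall>e>0. \<exists>g\<in>S. supdist f g < e)"

definition even_part :: "(real \<Rightarrow> real) \<Rightarrow> real \<Rightarrow> real" where
  "even_part f t = (f t + f (- t)) / 2"

definition Q :: "(real \<Rightarrow> real) \<Rightarrow> (real \<Rightarrow> real) \<Rightarrow> real" where
  "Q f g = integral {-1..1} (\<lambda>t. f (inv_into {-1..1} g t))"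

text \<open>Tuples (f_1,...,f_n) are functions nat \<Rightarrow> (real \<Rightarrow> real), indices 1..n.\<close>
definition GEN :: "nat \<Rightarrow> (nat \<Rightarrow> real \<Rightarrow> real) set" where
  "GEN n = {f. (\<forall>k\<in>{1..n}. f k \<in> G0)
     \<and> (\<forall>c0 c. (\<forall>t\<in>{-1..1}. c0 * t + (\<Sum>k=1..n. c k * f k t) = 0)
                \<longrightarrow> c0 = 0 \<and> (\<forall>k\<in>{1..n}. c k = 0))
     \<and> (\<forall>i\<in>{1..n}. \<forall>j\<in>{1..n}. i \<noteq> j \<longrightarrow> Q (f i) (f j) \<noteq> 0)}"

definition GENp :: "nat \<Rightarrow> (nat \<Rightarrow> real \<Rightarrow> real) set" where
  "GENp n = {f. (\<forall>k\<in>{1..n}. f k \<in> G0)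
     \<and> (\<forall>c. (\<forall>t\<in>{-1..1}. (\<Sum>k=1..n. c k * even_part (f k) t) = 0)
                \<longrightarrow> (\<forall>k\<in>{1..n}. c k = 0))
     \<and> (\<forall>i\<in>{1..n}. \<forall>j\<in>{1..n}. i \<noteq> j \<longrightarrow> Q (f i) (f j) \<noteq> 0)}"

definition Rel :: "nat \<Rightarrow> (nat \<Rightarrow> real \<Rightarrow> real) \<Rightarrow> (nat \<times> nat) set" where
  "Rel n f = {(i, j). i \<in> {1..n} \<and> j \<in> {1..n} \<and> Q (f j) (f i) > 0}"

definition tournament :: "'a set \<Rightarrow> ('a \<times> 'a) set \<Rightarrow> bool" where
  "tournament I R \<longleftrightarrow> R \<subseteq> I \<times> I \<and> (\<forall>i. (i, i) \<notin> R)
     \<and> (\<forall>i\<in>I. \<forall>j\<in>I. i \<noteq> j \<longrightarrow> ((i, j) \<in> R \<longleftrightarrow> (j, i) \<notin> R))"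

end

theory Submission
  imports Defs "HOL-Analysis.Analysis"
begin


definition incb :: "(real \<Rightarrow> real) \<Rightarrow> bool" where
  "incb p \<longleftrightarrow> continuous_on {-1..1} p \<and> strict_mono_on {-1..1} p \<and> p (-1) = -1 \<and> p 1 = 1"

lemma Gset_incb: "f \<in> Gset \<Longrightarrow> incb f"
  by (simp add: Gset_def incb_def)

lemma incb_le: assumes "incb p" "s \<in> {-1..1}" "t \<in> {-1..1}" "s \<le> t" shows "p s \<le> p t"
  using assms unfolding incb_def by (metis order_le_less strict_mono_onD)

lemma incb_less_iff: assumes "incb p" "s \<in> {-1..1}" "t \<in> {-1..1}" shows "p s < p t \<longleftrightarrow> s < t"
  using assms unfolding incb_def
  by (metis linorder_not_le order_le_less strict_mono_onD)

lemma incb_le_iff: assumes "incb p" "s \<in> {-1..1}" "t \<in> {-1..1}" shows "p s \<le> p t \<longleftrightarrow> s \<le> t"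
  using incb_less_iff[OF assms(1) assms(3) assms(2)] by linarith

lemma incb_maps: assumes "incb p" "s \<in> {-1..1}" shows "p s \<in> {-1..1}"
proof -
  have "p (-1) \<le> p s" "p s \<le> p 1" using incb_le[OF assms(1)] assms(2) by auto
  thus ?thesis using assms(1) unfolding incb_def by auto
qed

lemma incb_inj: "incb p \<Longrightarrow> inj_on p {-1..1}"
  unfolding incb_def using strict_mono_on_imp_inj_on by blast

lemma incb_image: assumes "incb p" shows "p ` {-1..1} = {-1..1}"
proof
  show "p ` {-1..1} \<subseteq> {-1..1}" using incb_maps[OF assms] by auto
  show "{-1..1} \<subseteq> p ` {-1..1}"
  proof
    fix y :: real assume y: "y \<in> {-1..1}"
    have "\<exists>x. -1 \<le> x \<and> x \<le> 1 \<and> p x = y"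
      apply (rule IVT') using assms y unfolding incb_def by auto
    thus "y \<in> p ` {-1..1}" by auto
  qed
qed

definition iv :: "(real \<Rightarrow> real) \<Rightarrow> real \<Rightarrow> real" where
  "iv p = inv_into {-1..1} p"

lemma iv_maps: assumes "incb p" "t \<in> {-1..1}" shows "iv p t \<in> {-1..1}"
  unfolding iv_def using incb_image[OF assms(1)] assms(2) by (metis inv_into_into)

lemma iv_right: assumes "incb p" "t \<in> {-1..1}" shows "p (iv p t) = t"
  unfolding iv_def using incb_image[OF assms(1)] assms(2) by (metis f_inv_into_f)

lemma iv_left: assumes "incb p" "s \<in> {-1..1}" shows "iv p (p s) = s"
  unfolding iv_def using incb_inj[OF assms(1)] assms(2) by (metis inv_into_f_f)

lemma iv_eq: assumes "incb p" "s \<in> {-1..1}" "p s = t" shows "iv p t = s"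
  using iv_left[OF assms(1,2)] assms(3) by simp

lemma incb_iv: assumes "incb p" shows "incb (iv p)"
proof -
  have c: "continuous_on {-1..1} (iv p)"
  proof -
    have "continuous_on (p ` {-1..1}) (iv p)"
      apply (rule continuous_on_inv) using assms unfolding incb_def
      by (auto intro: iv_left[OF assms])
    thus ?thesis using incb_image[OF assms] by simp
  qed
  have m: "strict_mono_on {-1..1} (iv p)"
  proof (rule strict_mono_onI)
    fix r s :: real assume rs: "r \<in> {-1..1}" "s \<in> {-1..1}" "r < s"
    show "iv p r < iv p s"
      using incb_less_iff[OF assms iv_maps[OF assms rs(1)] iv_maps[OF assms rs(2)]]
        iv_right[OF assms rs(1)] iv_right[OF assms rs(2)] rs(3) by simp
  qed
  have "iv p (-1) = -1" "iv p 1 = 1" using assms unfolding incb_def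
    by (auto intro!: iv_eq[OF assms])
  thus ?thesis using c m unfolding incb_def by simp
qed

lemma incb_id: "incb (\<lambda>t. t)"
  unfolding incb_def by (auto intro: strict_mono_onI continuous_intros)

lemma iv_id: "t \<in> {-1..1} \<Longrightarrow> iv (\<lambda>t. t) t = t"
  using iv_eq[OF incb_id] by simp

lemma incb_comp: assumes "incb p" "incb q" shows "incb (\<lambda>t. p (q t))"
proof -
  have "continuous_on {-1..1} (\<lambda>t. p (q t))"
    apply (rule continuous_on_compose2[of "{-1..1}" p "{-1..1}" q])
    using assms incb_maps[OF assms(2)] unfolding incb_def by auto
  moreover have "strict_mono_on {-1..1} (\<lambda>t. p (q t))"
    by (rule strict_mono_onI) (simp add: incb_less_iff[OF assms(1) incb_maps[OF assms(2)] incb_maps[OF assms(2)]] incb_less_iff[OF assms(2)])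
  ultimately show ?thesis using assms unfolding incb_def by simp
qed


lemma incb_cont: "incb p \<Longrightarrow> continuous_on {-1..1} p" by (simp add: incb_def)

lemma incb_integrable: "incb p \<Longrightarrow> {a..b} \<subseteq> {-1..1} \<Longrightarrow> p integrable_on {a..b}"
  by (meson continuous_on_subset incb_cont integrable_continuous_real)

lemma int_mono_bounds:
  assumes "incb p" "-1 \<le> a" "a \<le> b" "b \<le> 1"
  shows "(b - a) * p a \<le> integral {a..b} p \<and> integral {a..b} p \<le> (b - a) * p b"
proof -
  have i: "p integrable_on {a..b}" using incb_integrable[OF assms(1)] assms by auto
  have "integral {a..b} (\<lambda>_. p a) \<le> integral {a..b} p"
    by (rule integral_le) (use i assms in \<open>auto intro!: incb_le[OF assms(1)]\<close>)
  moreover have "integral {a..b} p \<le> integral {a..b} (\<lambda>_. p b)"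
    by (rule integral_le) (use i assms in \<open>auto intro!: incb_le[OF assms(1)]\<close>)
  ultimately show ?thesis using assms by (simp add: mult.commute)
qed

definition FF :: "(real \<Rightarrow> real) \<Rightarrow> real \<Rightarrow> real" where
  "FF p x = integral {-1..x} p + integral {-1..p x} (iv p) - x * p x"

lemma FF_step:
  assumes p: "incb p" and ab: "-1 \<le> a" "a \<le> b" "b \<le> 1"
  shows "\<bar>FF p b - FF p a\<bar> \<le> (b - a) * (p b - p a)"
proof -
  have q: "incb (iv p)" by (rule incb_iv[OF p])
  have pa: "p a \<in> {-1..1}" "p b \<in> {-1..1}" using incb_maps[OF p] ab by auto
  have pab: "p a \<le> p b" using incb_le[OF p] ab by auto
  have c1: "integral {-1..a} p + integral {a..b} p = integral {-1..b} p"
    by (rule Henstock_Kurzweil_Integration.integral_combine) (use ab incb_integrable[OF p] in auto)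
  have c2: "integral {-1..p a} (iv p) + integral {p a..p b} (iv p) = integral {-1..p b} (iv p)"
    by (rule Henstock_Kurzweil_Integration.integral_combine) (use pa pab incb_integrable[OF q] in auto)
  have b1: "(b - a) * p a \<le> integral {a..b} p \<and> integral {a..b} p \<le> (b - a) * p b"
    by (rule int_mono_bounds[OF p ab])
  have b2: "(p b - p a) * iv p (p a) \<le> integral {p a..p b} (iv p) \<and> integral {p a..p b} (iv p) \<le> (p b - p a) * iv p (p b)"
    by (rule int_mono_bounds[OF q]) (use pa pab in auto)
  have e: "iv p (p a) = a" "iv p (p b) = b" using iv_left[OF p] ab by auto
  have d: "FF p b - FF p a = integral {a..b} p + integral {p a..p b} (iv p) - (b * p b - a * p a)"
    unfolding FF_def using c1 c2 by linarith
  have e1: "(b - a) * p a + (p b - p a) * a - (b * p b - a * p a) = - ((b - a) * (p b - p a))"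
    by (simp add: algebra_simps)
  have e2: "(b - a) * p b + (p b - p a) * b - (b * p b - a * p a) = ((b - a) * (p b - p a))"
    by (simp add: algebra_simps)
  have l1: "(b - a) * p a \<le> integral {a..b} p" and u1: "integral {a..b} p \<le> (b - a) * p b" using b1 by auto
  have l2: "(p b - p a) * a \<le> integral {p a..p b} (iv p)" and u2: "integral {p a..p b} (iv p) \<le> (p b - p a) * b"
    using b2 e by auto
  have "FF p b - FF p a \<le> (b - a) * (p b - p a)" using d e2 u1 u2 by linarith
  moreover have "- ((b - a) * (p b - p a)) \<le> FF p b - FF p a" using d e1 l1 l2 by linarith
  ultimately show ?thesis by (simp add: abs_le_iff)
qed

lemma FF_bound:
  assumes p: "incb p" and "x \<in> {-1..1}" "y \<in> {-1..1}"
  shows "\<bar>FF p y - FF p x\<bar> \<le> \<bar>y - x\<bar> * \<bar>p y - p x\<bar>"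
proof (cases "x \<le> y")
  case True
  have "p x \<le> p y" using incb_le[OF p] assms True by auto
  then show ?thesis using FF_step[OF p, of x y] assms True by auto
next
  case False
  have "p y \<le> p x" using incb_le[OF p] assms False by auto
  then show ?thesis using FF_step[OF p, of y x] assms False by (auto simp: abs_minus_commute)
qed

lemma FF_deriv:
  assumes p: "incb p" and x: "x \<in> {-1..1}"
  shows "(FF p has_field_derivative 0) (at x within {-1..1})"
proof -
  have "((\<lambda>y. (FF p y - FF p x) / (y - x)) \<longlongrightarrow> 0) (at x within {-1..1})"
  proof (rule Lim_null_comparison)
    show "\<forall>\<^sub>F y in at x within {-1..1}. norm ((FF p y - FF p x) / (y - x)) \<le> \<bar>p y - p x\<bar>"
    proof -
      have "\<forall>\<^sub>F y in nhds x. y \<noteq> x \<longrightarrow> y \<in> {-1..1} \<longrightarrow> norm ((FF p y - FF p x) / (y - x)) \<le> \<bar>p y - p x\<bar>"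
      proof (rule always_eventually, intro allI impI)
        fix y assume y: "y \<noteq> x" "y \<in> {-1..1::real}"
        have "\<bar>FF p y - FF p x\<bar> \<le> \<bar>y - x\<bar> * \<bar>p y - p x\<bar>" by (rule FF_bound[OF p x y(2)])
        moreover have "\<bar>y - x\<bar> > 0" using y by auto
        ultimately show "norm ((FF p y - FF p x) / (y - x)) \<le> \<bar>p y - p x\<bar>"
          by (simp add: abs_divide divide_le_eq mult.commute)
      qed
      thus ?thesis by (simp add: eventually_at_filter)
    qed
    have "(p \<longlongrightarrow> p x) (at x within {-1..1})"
      using incb_cont[OF p] x by (simp add: continuous_on_def)
    hence "((\<lambda>y. \<bar>p y - p x\<bar>) \<longlongrightarrow> \<bar>p x - p x\<bar>) (at x within {-1..1})"
      by (intro tendsto_intros)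
    thus "((\<lambda>y. \<bar>p y - p x\<bar>) \<longlongrightarrow> 0) (at x within {-1..1})" by simp
  qed
  thus ?thesis by (simp add: has_field_derivative_iff)
qed

lemma young:
  assumes p: "incb p"
  shows "integral {-1..1} p + integral {-1..1} (iv p) = 0"
proof -
  obtain c where c: "\<forall>x\<in>{-1..1::real}. FF p x = c"
    using has_field_derivative_zero_constant[of "{-1..1::real}" "FF p"] FF_deriv[OF p] by auto
  have "FF p 1 = FF p (-1)" using c by auto
  moreover have "p 1 = 1" "p (-1) = -1" using p by (auto simp: incb_def)
  ultimately show ?thesis unfolding FF_def by simp
qed

lemma Q_incb: "Q f g = integral {-1..1} (\<lambda>t. f (iv g t))"
  by (simp add: Q_def iv_def)

lemma Q_antisym:
  assumes f: "incb f" and g: "incb g"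
  shows "Q f g = - Q g f"
proof -
  let ?p = "\<lambda>t. f (iv g t)"
  have p: "incb ?p" by (rule incb_comp[OF f incb_iv[OF g]])
  have "integral {-1..1} (iv ?p) = integral {-1..1} (\<lambda>t. g (iv f t))"
  proof (rule integral_cong)
    fix t :: real assume t: "t \<in> {-1..1}"
    show "iv ?p t = g (iv f t)"
    proof (rule iv_eq[OF p])
      show "g (iv f t) \<in> {-1..1}" by (rule incb_maps[OF g iv_maps[OF f t]])
      show "f (iv g (g (iv f t))) = t"
        using iv_left[OF g iv_maps[OF f t]] iv_right[OF f t] by simp
    qed
  qed
  thus ?thesis using young[OF p] by (simp add: Q_incb)
qed


locale linsp =
  fixes H :: "(real \<Rightarrow> real) set" and L :: "nat \<Rightarrow> (real \<Rightarrow> real) \<Rightarrow> real"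
  assumes H0: "(\<lambda>t. 0) \<in> H"
  and Hadd: "\<And>x y. x\<in>H \<Longrightarrow> y\<in>H \<Longrightarrow> (\<lambda>t. x t + y t) \<in> H"
  and Hsm: "\<And>c x. x\<in>H \<Longrightarrow> (\<lambda>t. c * x t) \<in> H"
  and Ladd: "\<And>j x y. x\<in>H \<Longrightarrow> y\<in>H \<Longrightarrow> L j (\<lambda>t. x t + y t) = L j x + L j y"
  and Lsm: "\<And>j c x. x\<in>H \<Longrightarrow> L j (\<lambda>t. c * x t) = c * L j x"
begin

lemma Hsum: "finite I \<Longrightarrow> (\<And>k. k \<in> I \<Longrightarrow> b k \<in> H) \<Longrightarrow> (\<lambda>t. \<Sum>k\<in>I. a k * b k t) \<in> H"
proof (induction I rule: finite_induct)
  case empty then show ?case using H0 by simp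
next
  case (insert m I)
  have "(\<lambda>t. a m * b m t + (\<Sum>k\<in>I. a k * b k t)) \<in> H"
    using Hadd[OF Hsm[of "b m" "a m"] insert.IH] insert.prems by auto
  then show ?case using insert.hyps by simp
qed

lemma Lzero: "L j (\<lambda>t. 0) = 0"
  using Lsm[OF H0, of j 0] by simp

lemma Lsum: "finite I \<Longrightarrow> (\<And>k. k \<in> I \<Longrightarrow> b k \<in> H) \<Longrightarrow> L j (\<lambda>t. \<Sum>k\<in>I. a k * b k t) = (\<Sum>k\<in>I. a k * L j (b k))"
proof (induction I rule: finite_induct)
  case empty then show ?case using Lzero by simp
next
  case (insert m I)
  have "L j (\<lambda>t. a m * b m t + (\<Sum>k\<in>I. a k * b k t)) = a m * L j (b m) + L j (\<lambda>t. \<Sum>k\<in>I. a k * b k t)"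
    using Ladd[OF Hsm[of "b m" "a m"] Hsum[OF insert.hyps(1)]] Lsm insert.prems by auto
  then show ?case using insert by simp
qed

lemma dual:
  assumes K: "finite K"
  shows "(\<exists>c. (\<exists>j\<in>K. c j \<noteq> 0) \<and> (\<forall>x\<in>H. (\<Sum>j\<in>K. c j * L j x) = 0)) \<or> (\<forall>y. \<exists>x\<in>H. \<forall>j\<in>K. L j x = y j)"
  using K
proof (induction K rule: finite_induct)
  case empty then show ?case using H0 by auto
next
  case (insert m K)
  show ?case
  proof (cases "\<exists>c. (\<exists>j\<in>K. c j \<noteq> 0) \<and> (\<forall>x\<in>H. (\<Sum>j\<in>K. c j * L j x) = 0)")
    case True
    then obtain c where c: "\<exists>j\<in>K. c j \<noteq> 0" "\<forall>x\<in>H. (\<Sum>j\<in>K. c j * L j x) = 0" by blast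
    let ?c = "c(m := 0)"
    have "\<forall>x\<in>H. (\<Sum>j\<in>insert m K. ?c j * L j x) = 0"
    proof
      fix x assume "x \<in> H"
      have "(\<Sum>j\<in>insert m K. ?c j * L j x) = (\<Sum>j\<in>K. ?c j * L j x)" using insert.hyps by simp
      also have "\<dots> = (\<Sum>j\<in>K. c j * L j x)" by (rule sum.cong) (use insert.hyps in auto)
      finally show "(\<Sum>j\<in>insert m K. ?c j * L j x) = 0" using c(2) \<open>x\<in>H\<close> by simp
    qed
    moreover have "\<exists>j\<in>insert m K. ?c j \<noteq> 0" using c(1) insert.hyps by auto
    ultimately show ?thesis by blast
  next
    case False
    hence surj: "\<forall>y. \<exists>x\<in>H. \<forall>j\<in>K. L j x = y j" using insert.IH by blast
    show ?thesis
    proof (cases "\<exists>z1\<in>H. \<exists>z2\<in>H. (\<forall>j\<in>K. L j z1 = L j z2) \<and> L m z1 \<noteq> L m z2")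
      case True
      then obtain z1 z2 where z: "z1 \<in> H" "z2 \<in> H" "\<forall>j\<in>K. L j z1 = L j z2" "L m z1 \<noteq> L m z2" by blast
      define u where "u = (\<lambda>t. z1 t + (-1) * z2 t)"
      have uH: "u \<in> H" unfolding u_def by (intro Hadd Hsm z)
      have Lu: "L j u = L j z1 - L j z2" for j
        using Ladd[OF z(1) Hsm[OF z(2)], of j "-1"] Lsm[OF z(2), of j "-1"] unfolding u_def by simp
      have "\<forall>y. \<exists>x\<in>H. \<forall>j\<in>insert m K. L j x = y j"
      proof
        fix y
        obtain z where zz: "z \<in> H" "\<forall>j\<in>K. L j z = y j" using surj by blast
        define \<alpha> where "\<alpha> = (y m - L m z) / L m u"
        have d: "L m u \<noteq> 0" using Lu z(4) by simp
        define x where "x = (\<lambda>t. z t + \<alpha> * u t)"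
        have xH: "x \<in> H" unfolding x_def by (intro Hadd Hsm zz uH)
        have Lx: "L j x = L j z + \<alpha> * L j u" for j unfolding x_def using Ladd[OF zz(1) Hsm[OF uH]] Lsm[OF uH] by simp
        have "\<forall>j\<in>insert m K. L j x = y j"
        proof
          fix j assume "j \<in> insert m K"
          then show "L j x = y j"
          proof
            assume "j = m" then show ?thesis using Lx d unfolding \<alpha>_def by simp
          next
            assume "j \<in> K" then show ?thesis using Lx Lu z(3) zz(2) by simp
          qed
        qed
        then show "\<exists>x\<in>H. \<forall>j\<in>insert m K. L j x = y j" using xH by blast
      qed
      then show ?thesis by blast
    next
      case False
      hence det: "\<And>z1 z2. z1 \<in> H \<Longrightarrow> z2 \<in> H \<Longrightarrow> (\<forall>j\<in>K. L j z1 = L j z2) \<Longrightarrow> L m z1 = L m z2" by blast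
      have "\<forall>k. \<exists>x\<in>H. \<forall>j\<in>K. L j x = (if j = k then 1 else 0)"
      proof
        fix k show "\<exists>x\<in>H. \<forall>j\<in>K. L j x = (if j = k then 1 else 0)"
          using spec[OF surj, of "\<lambda>j. if j = k then 1 else 0"] by simp
      qed
      then obtain hb where hb: "\<And>k. hb k \<in> H" "\<And>k j. j \<in> K \<Longrightarrow> L j (hb k) = (if j = k then 1 else 0)"
        by metis
      define c where "c = (\<lambda>j. if j = m then -1 else L m (hb j))"
      have "\<forall>x\<in>H. (\<Sum>j\<in>insert m K. c j * L j x) = 0"
      proof
        fix z assume zH: "z \<in> H"
        define w where "w = (\<lambda>t. \<Sum>k\<in>K. L k z * hb k t)"
        have wH: "w \<in> H" unfolding w_def by (rule Hsum[OF insert.hyps(1) hb(1)])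
        have Lw: "L j w = (\<Sum>k\<in>K. L k z * L j (hb k))" for j unfolding w_def by (rule Lsum[OF insert.hyps(1) hb(1)])
        have "\<forall>j\<in>K. L j w = L j z"
        proof
          fix j assume j: "j \<in> K"
          have "L j w = (\<Sum>k\<in>K. L k z * (if j = k then 1 else 0))" using Lw hb(2)[OF j] by simp
          also have "\<dots> = L j z" using j insert.hyps by (simp add: if_distrib cong: if_cong)
          finally show "L j w = L j z" .
        qed
        hence "L m z = L m w" using det[OF zH wH] by simp
        also have "\<dots> = (\<Sum>k\<in>K. L k z * L m (hb k))" by (rule Lw)
        finally have e: "L m z = (\<Sum>k\<in>K. L k z * L m (hb k))" .
        have "(\<Sum>j\<in>insert m K. c j * L j z) = - L m z + (\<Sum>j\<in>K. c j * L j z)"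
          using insert.hyps by (simp add: c_def)
        also have "(\<Sum>j\<in>K. c j * L j z) = (\<Sum>k\<in>K. L k z * L m (hb k))"
          by (rule sum.cong) (use insert.hyps in \<open>auto simp: c_def\<close>)
        finally show "(\<Sum>j\<in>insert m K. c j * L j z) = 0" using e by simp
      qed
      moreover have "\<exists>j\<in>insert m K. c j \<noteq> 0" by (auto simp: c_def)
      ultimately show ?thesis by blast
    qed
  qed
qed

end


definition indepK :: "nat set \<Rightarrow> (nat \<Rightarrow> real \<Rightarrow> real) \<Rightarrow> bool" where
  "indepK K p \<longleftrightarrow> (\<forall>c. (\<forall>t\<in>{-1..1}. (\<Sum>k\<in>K. c k * p k t) = 0) \<longrightarrow> (\<forall>k\<in>K. c k = 0))"

definition inspan :: "nat set \<Rightarrow> (nat \<Rightarrow> real \<Rightarrow> real) \<Rightarrow> (real \<Rightarrow> real) \<Rightarrow> bool" where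
  "inspan K p u \<longleftrightarrow> (\<exists>c. \<forall>t\<in>{-1..1}. u t = (\<Sum>k\<in>K. c k * p k t))"

lemma indepK_cong: "(\<And>k. k \<in> K \<Longrightarrow> p k = q k) \<Longrightarrow> indepK K p = indepK K q"
  unfolding indepK_def by (metis (no_types, lifting) sum.cong)

lemma inspan_cong: "(\<And>k. k \<in> K \<Longrightarrow> p k = q k) \<Longrightarrow> (\<And>t. t \<in> {-1..1} \<Longrightarrow> u t = v t) \<Longrightarrow> inspan K p u = inspan K q v"
  unfolding inspan_def by (metis (no_types, lifting) sum.cong)

lemma indepK_insert:
  assumes K: "finite K" "m \<notin> K" and ind: "indepK K p"
  shows "indepK (insert m K) (p(m := u)) \<longleftrightarrow> \<not> inspan K p u"
proof
  assume A: "indepK (insert m K) (p(m := u))"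
  show "\<not> inspan K p u"
  proof
    assume "inspan K p u"
    then obtain c where c: "\<forall>t\<in>{-1..1}. u t = (\<Sum>k\<in>K. c k * p k t)" unfolding inspan_def by blast
    define c' where "c' = c(m := -1)"
    have "\<forall>t\<in>{-1..1}. (\<Sum>k\<in>insert m K. c' k * (p(m := u)) k t) = 0"
    proof
      fix t :: real assume t: "t \<in> {-1..1}"
      have "(\<Sum>k\<in>insert m K. c' k * (p(m := u)) k t) = - u t + (\<Sum>k\<in>K. c' k * (p(m := u)) k t)"
        using K by (simp add: c'_def)
      also have "(\<Sum>k\<in>K. c' k * (p(m := u)) k t) = (\<Sum>k\<in>K. c k * p k t)"
        by (rule sum.cong) (use K in \<open>auto simp: c'_def\<close>)
      finally show "(\<Sum>k\<in>insert m K. c' k * (p(m := u)) k t) = 0" using c t by simp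
    qed
    hence "c' m = 0" using A unfolding indepK_def by blast
    thus False by (simp add: c'_def)
  qed
next
  assume N: "\<not> inspan K p u"
  show "indepK (insert m K) (p(m := u))"
    unfolding indepK_def
  proof (intro allI impI)
    fix c assume c: "\<forall>t\<in>{-1..1}. (\<Sum>k\<in>insert m K. c k * (p(m := u)) k t) = 0"
    have e: "(\<Sum>k\<in>insert m K. c k * (p(m := u)) k t) = c m * u t + (\<Sum>k\<in>K. c k * p k t)" for t
    proof -
      have "(\<Sum>k\<in>K. c k * (p(m := u)) k t) = (\<Sum>k\<in>K. c k * p k t)"
        by (rule sum.cong) (use K in auto)
      thus ?thesis using K by simp
    qed
    have cm: "c m = 0"
    proof (rule ccontr)
      assume cm: "c m \<noteq> 0"
      have "\<forall>t\<in>{-1..1}. u t = (\<Sum>k\<in>K. (- c k / c m) * p k t)"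
      proof
        fix t :: real assume "t \<in> {-1..1}"
        hence "c m * u t + (\<Sum>k\<in>K. c k * p k t) = 0" using c e by simp
        hence "u t = - (\<Sum>k\<in>K. c k * p k t) / c m" using cm by (simp add: field_simps)
        also have "\<dots> = (\<Sum>k\<in>K. (- c k / c m) * p k t)"
          by (simp add: sum_divide_distrib sum_negf[symmetric])
        finally show "u t = (\<Sum>k\<in>K. (- c k / c m) * p k t)" .
      qed
      hence "inspan K p u" unfolding inspan_def by (intro exI[of _ "\<lambda>k. - c k / c m"])
      thus False using N by simp
    qed
    have "\<forall>t\<in>{-1..1}. (\<Sum>k\<in>K. c k * p k t) = 0" using c e cm by simp
    hence "\<forall>k\<in>K. c k = 0" using ind unfolding indepK_def by blast
    thus "\<forall>k\<in>insert m K. c k = 0" using cm by simp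
  qed
qed

lemma inspan_comb:
  assumes "inspan K p a" "inspan K p b"
  shows "inspan K p (\<lambda>t. \<alpha> * a t + \<beta> * b t)"
proof -
  obtain c d where c: "\<forall>t\<in>{-1..1}. a t = (\<Sum>k\<in>K. c k * p k t)" and d: "\<forall>t\<in>{-1..1}. b t = (\<Sum>k\<in>K. d k * p k t)"
    using assms unfolding inspan_def by blast
  have "\<forall>t\<in>{-1..1}. \<alpha> * a t + \<beta> * b t = (\<Sum>k\<in>K. (\<alpha> * c k + \<beta> * d k) * p k t)"
    using c d by (simp add: sum_distrib_left sum.distrib algebra_simps)
  thus ?thesis unfolding inspan_def by (intro exI[of _ "\<lambda>k. \<alpha> * c k + \<beta> * d k"])
qed

lemma aux_div: "(a/d)*X + (-b/d)*Y = (a*X - b*Y)/(d::real)"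
  by (simp add: diff_divide_distrib)

lemma aux_half: "0 < (x::real) \<Longrightarrow> d / (2 * x) * x = d / 2"
  by simp

lemma seg_unique:
  assumes N: "\<not> inspan K p u2"
    and s: "inspan K p (\<lambda>t. (1 - s) * u1 t + s * u2 t)"
    and s': "inspan K p (\<lambda>t. (1 - s') * u1 t + s' * u2 t)"
  shows "s = s'"
proof (rule ccontr)
  assume ne: "s \<noteq> s'"
  have "inspan K p (\<lambda>t. ((1 - s') / (s - s')) * ((1 - s) * u1 t + s * u2 t) + (- (1 - s) / (s - s')) * ((1 - s') * u1 t + s' * u2 t))"
    by (rule inspan_comb[OF s s'])
  moreover have "(\<lambda>t. ((1 - s') / (s - s')) * ((1 - s) * u1 t + s * u2 t) + (- (1 - s) / (s - s')) * ((1 - s') * u1 t + s' * u2 t)) = u2"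
  proof
    fix t
    have nz: "s - s' \<noteq> 0" using ne by simp
    have x: "(1 - s') * ((1 - s) * u1 t + s * u2 t) - (1 - s) * ((1 - s') * u1 t + s' * u2 t) = (s - s') * u2 t"
      by (simp add: algebra_simps)
    have "((1 - s') / (s - s')) * ((1 - s) * u1 t + s * u2 t) + (- (1 - s) / (s - s')) * ((1 - s') * u1 t + s' * u2 t)
       = ((1 - s') * ((1 - s) * u1 t + s * u2 t) - (1 - s) * ((1 - s') * u1 t + s' * u2 t)) / (s - s')"
      by (rule aux_div)
    also have "\<dots> = ((s - s') * u2 t) / (s - s')" by (simp only: x)
    also have "\<dots> = u2 t" using nz by simp
    finally show "((1 - s') / (s - s')) * ((1 - s) * u1 t + s * u2 t) + (- (1 - s) / (s - s')) * ((1 - s') * u1 t + s' * u2 t) = u2 t" .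
  qed
  ultimately show False using N by simp
qed

lemma cont_sq_zero:
  fixes v :: "real \<Rightarrow> real"
  assumes "continuous_on {-1..1} v" "integral {-1..1} (\<lambda>t. v t * v t) = 0" "t \<in> {-1..1}"
  shows "v t = 0"
proof -
  have c: "continuous_on (cbox (-1) 1) (\<lambda>t. v t * v t)" using assms(1) by (auto intro: continuous_intros)
  have i: "((\<lambda>t. v t * v t) has_integral 0) (cbox (-1) 1)"
    using assms(2) integrable_continuous_real[OF c[unfolded cbox_interval]]
    by (metis cbox_interval has_integral_integral)
  have "v t * v t = 0"
    by (rule has_integral_0_cbox_imp_0[OF c _ i]) (use assms(3) in auto)
  thus ?thesis by simp
qed

lemma open_notspan:
  assumes K: "finite K" and pc: "\<And>k. k \<in> K \<Longrightarrow> continuous_on {-1..1} (p k)"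
    and ind: "indepK K p" and uc: "continuous_on {-1..1} u" and N: "\<not> inspan K p u"
  shows "\<exists>e>0. \<forall>u'. (\<forall>t\<in>{-1..1}. \<bar>u t - u' t\<bar> < e) \<longrightarrow> \<not> inspan K p u'"
proof -
  define H where "H = {h :: real \<Rightarrow> real. continuous_on {-1..1} h}"
  define L where "L = (\<lambda>j h. if j \<in> K then integral {-1..1} (\<lambda>t. h t * p j t) else 0)"
  have intg: "(\<lambda>t. h t * p j t) integrable_on {-1..1}" if "h \<in> H" "j \<in> K" for h j
    using that pc unfolding H_def by (auto intro!: integrable_continuous_real continuous_intros)
  interpret linsp H L
  proof
    show "(\<lambda>t. 0) \<in> H" unfolding H_def by simp
    show "(\<lambda>t. x t + y t) \<in> H" if "x \<in> H" "y \<in> H" for x y using that unfolding H_def by (auto intro: continuous_intros)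
    show "(\<lambda>t. c * x t) \<in> H" if "x \<in> H" for c x using that unfolding H_def by (auto intro: continuous_intros)
    show "L j (\<lambda>t. x t + y t) = L j x + L j y" if "x \<in> H" "y \<in> H" for j x y
    proof (cases "j \<in> K")
      case True
      have "integral {-1..1} (\<lambda>t. (x t + y t) * p j t) = integral {-1..1} (\<lambda>t. x t * p j t + y t * p j t)"
        by (simp add: algebra_simps)
      also have "\<dots> = integral {-1..1} (\<lambda>t. x t * p j t) + integral {-1..1} (\<lambda>t. y t * p j t)"
        by (rule integral_add) (use intg that True in auto)
      finally show ?thesis using True unfolding L_def by simp
    qed (simp add: L_def)
    show "L j (\<lambda>t. c * x t) = c * L j x" for j c x
      unfolding L_def by (simp add: mult.assoc)
  qed
  have dep_false: "\<not> (\<exists>c. (\<exists>j\<in>K. c j \<noteq> 0) \<and> (\<forall>x\<in>H. (\<Sum>j\<in>K. c j * L j x) = 0))"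
  proof
    assume "\<exists>c. (\<exists>j\<in>K. c j \<noteq> 0) \<and> (\<forall>x\<in>H. (\<Sum>j\<in>K. c j * L j x) = 0)"
    then obtain c where c: "\<exists>j\<in>K. c j \<noteq> 0" "\<forall>x\<in>H. (\<Sum>j\<in>K. c j * L j x) = 0" by blast
    define v where "v = (\<lambda>t. \<Sum>k\<in>K. c k * p k t)"
    have vc: "continuous_on {-1..1} v" unfolding v_def using pc by (auto intro!: continuous_intros)
    hence vH: "v \<in> H" unfolding H_def by simp
    have "integral {-1..1} (\<lambda>t. v t * v t) = integral {-1..1} (\<lambda>t. \<Sum>k\<in>K. c k * (v t * p k t))"
      unfolding v_def by (simp add: sum_distrib_left algebra_simps)
    also have "\<dots> = (\<Sum>k\<in>K. integral {-1..1} (\<lambda>t. c k * (v t * p k t)))"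
      by (rule integral_sum[OF K]) (auto intro!: integrable_continuous_real continuous_intros pc vc)
    also have "\<dots> = (\<Sum>k\<in>K. c k * L k v)"
      by (rule sum.cong) (auto simp: L_def)
    also have "\<dots> = 0" using c(2) vH by simp
    finally have "\<forall>t\<in>{-1..1}. v t = 0" using cont_sq_zero[OF vc] by blast
    hence "\<forall>k\<in>K. c k = 0" using ind unfolding indepK_def v_def by blast
    thus False using c(1) by blast
  qed
  hence surj: "\<forall>y. \<exists>x\<in>H. \<forall>j\<in>K. L j x = y j" using dual[OF K] by blast
  have "\<forall>k. \<exists>x\<in>H. \<forall>j\<in>K. L j x = (if j = k then 1 else 0)"
  proof
    fix k show "\<exists>x\<in>H. \<forall>j\<in>K. L j x = (if j = k then 1 else 0)"
      using spec[OF surj, of "\<lambda>j. if j = k then 1 else 0"] by simp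
  qed
  then obtain w where wH: "\<And>k. w k \<in> H" and wL: "\<And>k j. j \<in> K \<Longrightarrow> L j (w k) = (if j = k then 1 else 0)"
    by metis
  have wc: "continuous_on {-1..1} (w k)" for k using wH unfolding H_def by simp
  define E where "E = (\<lambda>k h. integral {-1..1} (\<lambda>t. w k t * h t))"
  have Ecoef: "E j (\<lambda>t. \<Sum>k\<in>K. c k * p k t) = c j" if j: "j \<in> K" for c j
  proof -
    have "E j (\<lambda>t. \<Sum>k\<in>K. c k * p k t) = integral {-1..1} (\<lambda>t. \<Sum>k\<in>K. c k * (w j t * p k t))"
      unfolding E_def by (simp add: sum_distrib_left algebra_simps)
    also have "\<dots> = (\<Sum>k\<in>K. integral {-1..1} (\<lambda>t. c k * (w j t * p k t)))"
      by (rule integral_sum[OF K]) (auto intro!: integrable_continuous_real continuous_intros pc wc)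
    also have "\<dots> = (\<Sum>k\<in>K. c k * L k (w j))"
      by (rule sum.cong) (auto simp: L_def)
    also have "\<dots> = (\<Sum>k\<in>K. c k * (if k = j then 1 else 0))"
      by (rule sum.cong) (auto simp: wL)
    also have "\<dots> = c j" using j K by (simp add: if_distrib cong: if_cong)
    finally show ?thesis .
  qed
  define P where "P = (\<lambda>t. \<Sum>k\<in>K. E k u * p k t)"
  have "\<not> (\<forall>t\<in>{-1..1}. u t = P t)"
  proof
    assume "\<forall>t\<in>{-1..1}. u t = P t"
    hence "inspan K p u" unfolding inspan_def P_def by (intro exI[of _ "\<lambda>k. E k u"])
    thus False using N by simp
  qed
  then obtain t0 where t0: "t0 \<in> {-1..1}" "u t0 \<noteq> P t0" by blast
  define d where "d = \<bar>u t0 - P t0\<bar>"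
  have dpos: "d > 0" using t0 unfolding d_def by simp
  define C where "C = (\<Sum>k\<in>K. integral {-1..1} (\<lambda>t. \<bar>w k t\<bar>) * \<bar>p k t0\<bar>)"
  have Cnn: "C \<ge> 0" unfolding C_def
    by (intro sum_nonneg mult_nonneg_nonneg integral_nonneg) (auto intro!: integrable_continuous_real continuous_intros wc)
  define e where "e = d / (2 * (1 + C))"
  have epos: "e > 0" unfolding e_def using dpos Cnn by simp
  show ?thesis
  proof (intro exI[of _ e] conjI epos allI impI notI)
    fix u' assume close: "\<forall>t\<in>{-1..1}. \<bar>u t - u' t\<bar> < e" and sp: "inspan K p u'"
    then obtain c where c: "\<forall>t\<in>{-1..1}. u' t = (\<Sum>k\<in>K. c k * p k t)" unfolding inspan_def by blast
    define v where "v = (\<lambda>t. \<Sum>k\<in>K. c k * p k t)"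
    have vc: "continuous_on {-1..1} v" unfolding v_def using pc by (auto intro!: continuous_intros)
    have uv: "\<bar>u t - v t\<bar> < e" if "t \<in> {-1..1}" for t using close c that unfolding v_def by simp
    have Ediff: "\<bar>E k u - c k\<bar> \<le> e * integral {-1..1} (\<lambda>t. \<bar>w k t\<bar>)" if k: "k \<in> K" for k
    proof -
      have i1: "(\<lambda>t. w k t * u t) integrable_on {-1..1}" "(\<lambda>t. w k t * v t) integrable_on {-1..1}"
        using wc uc vc by (auto intro!: integrable_continuous_real continuous_intros)
      have "E k u - c k = E k u - E k v" using Ecoef[OF k] unfolding v_def by simp
      also have "\<dots> = integral {-1..1} (\<lambda>t. w k t * (u t - v t))"
        unfolding E_def using integral_diff[OF i1] by (simp add: algebra_simps)
      finally have eq: "E k u - c k = integral {-1..1} (\<lambda>t. w k t * (u t - v t))" .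
      have "\<bar>integral {-1..1} (\<lambda>t. w k t * (u t - v t))\<bar> \<le> integral {-1..1} (\<lambda>t. e * \<bar>w k t\<bar>)"
      proof -
        have "norm (integral {-1..1} (\<lambda>t. w k t * (u t - v t))) \<le> integral {-1..1} (\<lambda>t. e * \<bar>w k t\<bar>)"
        proof (rule integral_norm_bound_integral)
          show "(\<lambda>t. w k t * (u t - v t)) integrable_on {-1..1}"
            using wc uc vc by (auto intro!: integrable_continuous_real continuous_intros)
          show "(\<lambda>t. e * \<bar>w k t\<bar>) integrable_on {-1..1}"
            using wc by (auto intro!: integrable_continuous_real continuous_intros)
          fix t :: real assume "t \<in> {-1..1}"
          hence "\<bar>u t - v t\<bar> \<le> e" using uv by (simp add: less_imp_le)
          thus "norm (w k t * (u t - v t)) \<le> e * \<bar>w k t\<bar>"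
            by (simp add: abs_mult) (metis abs_ge_zero mult.commute mult_right_mono)
        qed
        thus ?thesis by simp
      qed
      thus ?thesis using eq by simp
    qed
    have "\<bar>P t0 - v t0\<bar> = \<bar>\<Sum>k\<in>K. (E k u - c k) * p k t0\<bar>"
      unfolding P_def v_def by (simp add: sum_subtractf[symmetric] algebra_simps)
    also have "\<dots> \<le> (\<Sum>k\<in>K. \<bar>(E k u - c k) * p k t0\<bar>)" by (rule sum_abs)
    also have "\<dots> \<le> (\<Sum>k\<in>K. e * integral {-1..1} (\<lambda>t. \<bar>w k t\<bar>) * \<bar>p k t0\<bar>)"
      by (rule sum_mono) (simp add: abs_mult mult_right_mono Ediff)
    also have "\<dots> = e * C" unfolding C_def by (simp add: sum_distrib_left mult.assoc)
    finally have b1: "\<bar>P t0 - v t0\<bar> \<le> e * C" .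
    have b2: "\<bar>u t0 - v t0\<bar> < e" using uv t0 by simp
    have "d \<le> \<bar>u t0 - v t0\<bar> + \<bar>P t0 - v t0\<bar>" unfolding d_def by linarith
    also have "\<dots> < e + e * C" using b1 b2 by linarith
    also have "e + e * C = d / 2"
    proof -
      have "e + e * C = e * (1 + C)" by (simp add: distrib_left)
      also have "\<dots> = d / 2" unfolding e_def by (rule aux_half) (use Cnn in simp)
      finally show ?thesis .
    qed
    finally show False using dpos by simp
  qed
qed


lemma int_id_zero: "integral {-1..1} (\<lambda>t::real. t) = 0"
proof -
  have "integral {-1..1} (iv (\<lambda>t. t)) = integral {-1..1} (\<lambda>t::real. t)"
    by (rule integral_cong) (simp add: iv_id)
  thus ?thesis using young[OF incb_id] by simp
qed

lemma id_Gset: "(\<lambda>t. t) \<in> Gset"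
  unfolding Gset_def by (auto intro: strict_mono_onI continuous_intros)

lemma id_G0: "(\<lambda>t. t) \<in> G0"
  unfolding G0_def using id_Gset int_id_zero by simp

lemma G0_incb: "g \<in> G0 \<Longrightarrow> incb g"
  unfolding G0_def using Gset_incb by simp

lemma G0_int: "g \<in> G0 \<Longrightarrow> integral {-1..1} g = 0"
  unfolding G0_def by simp

lemma G0_int_iv: "g \<in> G0 \<Longrightarrow> integral {-1..1} (iv g) = 0"
  using young[OF G0_incb] G0_int by fastforce

lemma cont_comp_iv:
  assumes "incb p" "continuous_on {-1..1} h"
  shows "continuous_on {-1..1} (\<lambda>t. h (iv p t))"
  apply (rule continuous_on_compose2[of "{-1..1}" h "{-1..1}" "iv p"])
  using assms incb_cont[OF incb_iv[OF assms(1)]] iv_maps[OF assms(1)] by auto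

lemma ramp_int_bounds:
  assumes p: "incb p" and ab: "-1 \<le> a" "a \<le> b" "b \<le> 1"
    and rc: "continuous_on {-1..1} r"
    and r01: "\<And>s. s \<in> {-1..1} \<Longrightarrow> 0 \<le> r s \<and> r s \<le> 1"
    and r0: "\<And>s. s \<in> {-1..1} \<Longrightarrow> s \<le> a \<Longrightarrow> r s = 0"
    and r1: "\<And>s. s \<in> {-1..1} \<Longrightarrow> b \<le> s \<Longrightarrow> r s = 1"
  shows "1 - p b \<le> integral {-1..1} (\<lambda>t. r (iv p t)) \<and> integral {-1..1} (\<lambda>t. r (iv p t)) \<le> 1 - p a"
proof -
  let ?g = "\<lambda>t. r (iv p t)"
  have gc: "continuous_on {-1..1} ?g" by (rule cont_comp_iv[OF p rc])
  have gi: "?g integrable_on {x..y}" if "-1 \<le> x" "y \<le> 1" for x y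
    by (rule integrable_continuous_real, rule continuous_on_subset[OF gc]) (use that in auto)
  have pa: "p a \<in> {-1..1}" "p b \<in> {-1..1}" using incb_maps[OF p] ab by auto
  have pab: "p a \<le> p b" using incb_le[OF p] ab by auto
  have c1: "integral {-1..p a} ?g + integral {p a..1} ?g = integral {-1..1} ?g"
    by (rule Henstock_Kurzweil_Integration.integral_combine) (use pa gi in auto)
  have c2: "integral {p a..p b} ?g + integral {p b..1} ?g = integral {p a..1} ?g"
    by (rule Henstock_Kurzweil_Integration.integral_combine) (use pa pab gi in auto)
  have I1: "integral {-1..p a} ?g = 0"
  proof -
    have "integral {-1..p a} ?g = integral {-1..p a} (\<lambda>_. 0::real)"
    proof (rule integral_cong)
      fix t assume t: "t \<in> {-1..p a}"
      hence t': "t \<in> {-1..1}" using pa by auto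
      have "iv p t \<le> iv p (p a)"
        using incb_le[OF incb_iv[OF p] t'] pa t by auto
      hence "iv p t \<le> a" using iv_left[OF p] ab by simp
      thus "?g t = 0" using r0 iv_maps[OF p t'] by simp
    qed
    thus ?thesis by simp
  qed
  have I3: "integral {p b..1} ?g = 1 - p b"
  proof -
    have "integral {p b..1} ?g = integral {p b..1} (\<lambda>_. 1::real)"
    proof (rule integral_cong)
      fix t assume t: "t \<in> {p b..1}"
      hence t': "t \<in> {-1..1}" using pa by auto
      have "iv p (p b) \<le> iv p t"
        using incb_le[OF incb_iv[OF p] _ t'] pa t by auto
      hence "b \<le> iv p t" using iv_left[OF p] ab by simp
      thus "?g t = 1" using r1 iv_maps[OF p t'] by simp
    qed
    thus ?thesis using pa by simp
  qed
  have I2l: "0 \<le> integral {p a..p b} ?g"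
    by (rule integral_nonneg) (use gi pa r01 iv_maps[OF p] in auto)
  have I2u: "integral {p a..p b} ?g \<le> integral {p a..p b} (\<lambda>_. 1::real)"
    by (rule integral_le) (use gi pa r01 iv_maps[OF p] in auto)
  hence I2u': "integral {p a..p b} ?g \<le> p b - p a" using pab by simp
  have "p a \<le> p b" by (rule pab)
  show ?thesis using c1 c2 I1 I3 I2l I2u' by linarith
qed

lemma clamp_lip: "\<bar>max 0 (min 1 x) - max 0 (min 1 y)\<bar> \<le> \<bar>x - y::real\<bar>"
  by (simp add: max_def min_def)


definition Phi :: "nat \<Rightarrow> (nat \<Rightarrow> real \<Rightarrow> real) \<Rightarrow> nat \<Rightarrow> real \<Rightarrow> real" where
  "Phi n f k = (if k \<in> {1..n} then f k else (\<lambda>t. t))"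

definition LH :: "(real \<Rightarrow> real) set" where
  "LH = {h. h (-1) = 0 \<and> h 1 = 0 \<and> (\<forall>t. t \<notin> {-1..1} \<longrightarrow> h t = 0) \<and> (\<exists>M. lipschitz_on M {-1..1} h)}"

definition LL :: "nat \<Rightarrow> (nat \<Rightarrow> real \<Rightarrow> real) \<Rightarrow> nat \<Rightarrow> (real \<Rightarrow> real) \<Rightarrow> real" where
  "LL n f j h = integral {-1..1} (\<lambda>t. h (iv (Phi n f j) t))"

lemma Phi_G0: "(\<forall>k\<in>{1..n}. f k \<in> G0) \<Longrightarrow> Phi n f j \<in> G0"
  unfolding Phi_def using id_G0 by auto

lemma Phi_incb: "(\<forall>k\<in>{1..n}. f k \<in> G0) \<Longrightarrow> incb (Phi n f j)"
  using Phi_G0 G0_incb by blast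

lemma LH_cont: "h \<in> LH \<Longrightarrow> continuous_on {-1..1} h"
  unfolding LH_def using lipschitz_on_continuous_on by blast

lemma LL_integrable: "(\<forall>k\<in>{1..n}. f k \<in> G0) \<Longrightarrow> h \<in> LH \<Longrightarrow> (\<lambda>t. h (iv (Phi n f j) t)) integrable_on {-1..1}"
  by (rule integrable_continuous_real, rule cont_comp_iv[OF Phi_incb LH_cont])

lemma linsp_LL:
  assumes G: "\<forall>k\<in>{1..n}. f k \<in> G0"
  shows "linsp LH (LL n f)"
proof
  show "(\<lambda>t. 0) \<in> LH" unfolding LH_def by (auto intro: lipschitz_intros)
  show "(\<lambda>t. x t + y t) \<in> LH" if "x \<in> LH" "y \<in> LH" for x y
    using that unfolding LH_def by (auto intro: lipschitz_on_add)
  show "(\<lambda>t. c * x t) \<in> LH" if "x \<in> LH" for c x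
    using that unfolding LH_def by (auto intro: lipschitz_on_cmult_real)
  show "LL n f j (\<lambda>t. x t + y t) = LL n f j x + LL n f j y" if "x \<in> LH" "y \<in> LH" for j x y
    unfolding LL_def by (rule integral_add) (use LL_integrable[OF G] that in auto)
  show "LL n f j (\<lambda>t. c * x t) = c * LL n f j x" for j c x
    unfolding LL_def by simp
qed

lemma GEN_indep: "f \<in> GEN n \<Longrightarrow> indepK {0..n} (Phi n f)"
  unfolding indepK_def
proof (intro allI impI)
  fix c assume f: "f \<in> GEN n" and c: "\<forall>t\<in>{-1..1}. (\<Sum>k\<in>{0..n}. c k * Phi n f k t) = 0"
  have e: "(\<Sum>k\<in>{0..n}. c k * Phi n f k t) = c 0 * t + (\<Sum>k=1..n. c k * f k t)" for t
  proof -
    have "(\<Sum>k\<in>{0..n}. c k * Phi n f k t) = c 0 * Phi n f 0 t + (\<Sum>k\<in>{Suc 0..n}. c k * Phi n f k t)"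
      by (rule sum.atLeast_Suc_atMost) simp
    also have "(\<Sum>k\<in>{Suc 0..n}. c k * Phi n f k t) = (\<Sum>k=1..n. c k * f k t)"
      by (rule sum.cong) (auto simp: Phi_def)
    finally show ?thesis by (simp add: Phi_def)
  qed
  have "c 0 = 0 \<and> (\<forall>k\<in>{1..n}. c k = 0)"
    using f c e unfolding GEN_def by auto
  thus "\<forall>k\<in>{0..n}. c k = 0"
    by (metis atLeastAtMost_iff le_0_eq not_less_eq_eq One_nat_def)
qed

lemma nodep:
  assumes G: "\<forall>k\<in>{1..n}. f k \<in> G0" and ind: "indepK {0..n} (Phi n f)"
    and c: "\<forall>h\<in>LH. (\<Sum>j\<in>{0..n}. c j * LL n f j h) = 0"
  shows "\<forall>j\<in>{0..n}. c j = 0"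
proof -
  let ?P = "Phi n f"
  define S where "S = (\<lambda>a. \<Sum>j\<in>{0..n}. c j * ?P j a)"
  have Sz: "S a = 0" if a: "a \<in> {-1<..<1}" for a
  proof -
    define B where "B = (\<lambda>w. \<Sum>j\<in>{0..n}. \<bar>c j\<bar> * (?P j (a + w) - ?P j a))"
    have bound: "\<bar>S a\<bar> \<le> B w" if w: "w \<in> {0<..<1-a}" for w
    proof -
      define r where "r = (\<lambda>s. max 0 (min 1 ((s - a) / w)))"
      define h where "h = (\<lambda>s. if s \<in> {-1..1} then r s - (s + 1) / 2 else 0)"
      have wpos: "w > 0" and wa: "a + w < 1" using w by auto
      have rc: "continuous_on {-1..1} r" unfolding r_def using wpos by (intro continuous_intros) auto
      have rlip: "\<bar>r x - r y\<bar> \<le> \<bar>x - y\<bar> / w" for x y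
      proof -
        have "\<bar>r x - r y\<bar> \<le> \<bar>(x - a) / w - (y - a) / w\<bar>" unfolding r_def by (rule clamp_lip)
        also have "(x - a) / w - (y - a) / w = (x - y) / w" by (simp add: diff_divide_distrib)
        finally show ?thesis using wpos by simp
      qed
      have hLH: "h \<in> LH"
      proof -
        have "r (-1) = 0" unfolding r_def using a wpos by (simp add: divide_neg_pos)
        moreover have "r 1 = 1" unfolding r_def using wa wpos by simp
        moreover have "lipschitz_on (1 / w + 1 / 2) {-1..1} h"
        proof (rule lipschitz_onI)
          fix x y :: real assume xy: "x \<in> {-1..1}" "y \<in> {-1..1}"
          have e: "r x - (x + 1) / 2 - (r y - (y + 1) / 2) = (r x - r y) - (x - y) / 2"
            by (simp add: field_simps)
          have "dist (h x) (h y) = \<bar>(r x - r y) - (x - y) / 2\<bar>"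
            using xy unfolding h_def dist_real_def by (simp only: e if_True)
          also have "\<dots> \<le> \<bar>r x - r y\<bar> + \<bar>x - y\<bar> / 2" using abs_triangle_ineq4[of "r x - r y" "(x - y) / 2"] by simp
          also have "\<dots> \<le> \<bar>x - y\<bar> / w + \<bar>x - y\<bar> / 2" using rlip by simp
          also have "\<dots> = (1 / w + 1 / 2) * dist x y" by (simp add: dist_real_def algebra_simps)
          finally show "dist (h x) (h y) \<le> (1 / w + 1 / 2) * dist x y" .
        next
          show "0 \<le> 1 / w + 1 / 2" using wpos by simp
        qed
        ultimately show ?thesis unfolding LH_def h_def by auto
      qed
      define R where "R = (\<lambda>j. integral {-1..1} (\<lambda>t. r (iv (?P j) t)))"
      have Lh: "LL n f j h = R j - 1" for j
      proof -
        have p: "incb (?P j)" by (rule Phi_incb[OF G])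
        have "LL n f j h = integral {-1..1} (\<lambda>t. r (iv (?P j) t) - (iv (?P j) t + 1) / 2)"
          unfolding LL_def by (rule integral_cong) (use iv_maps[OF p] in \<open>auto simp: h_def\<close>)
        also have "\<dots> = R j - integral {-1..1} (\<lambda>t. (iv (?P j) t + 1) / 2)"
          unfolding R_def
          by (rule integral_diff) (auto intro!: integrable_continuous_real cont_comp_iv[OF p] continuous_intros rc incb_cont[OF incb_iv[OF p]])
        also have "integral {-1..1} (\<lambda>t. (iv (?P j) t + 1) / 2) = (integral {-1..1} (iv (?P j)) + integral {-1..1} (\<lambda>t::real. 1::real)) / 2"
          by (simp add: integral_add integrable_continuous_real incb_cont[OF incb_iv[OF p]])
        also have "\<dots> = 1" using G0_int_iv[OF Phi_G0[OF G]] integral_const_real[of "-1" 1 "1::real"] by (simp add: content_real)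
        finally show ?thesis .
      qed
      have Rb: "1 - ?P j (a + w) \<le> R j \<and> R j \<le> 1 - ?P j a" for j
        unfolding R_def
      proof (rule ramp_int_bounds[OF Phi_incb[OF G] _ _ _ rc])
        show "-1 \<le> a" "a \<le> a + w" "a + w \<le> 1" using a wpos wa by auto
        fix s :: real assume s: "s \<in> {-1..1}"
        show "0 \<le> r s \<and> r s \<le> 1" unfolding r_def by simp
        show "s \<le> a \<Longrightarrow> r s = 0" unfolding r_def using wpos by (simp add: divide_nonpos_pos)
        show "a + w \<le> s \<Longrightarrow> r s = 1" unfolding r_def using wpos by simp
      qed
      have "(\<Sum>j\<in>{0..n}. c j * LL n f j h) = 0" using c hLH by blast
      hence "(\<Sum>j\<in>{0..n}. c j * (R j - 1)) = 0" using Lh by simp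
      hence "S a = (\<Sum>j\<in>{0..n}. c j * (?P j a + (R j - 1)))"
        unfolding S_def by (simp add: distrib_left sum.distrib)
      hence "\<bar>S a\<bar> \<le> (\<Sum>j\<in>{0..n}. \<bar>c j * (?P j a + (R j - 1))\<bar>)" using sum_abs by simp
      also have "\<dots> \<le> B w" unfolding B_def
      proof (rule sum_mono)
        fix j assume "j \<in> {0..n}"
        have "\<bar>?P j a + (R j - 1)\<bar> \<le> ?P j (a + w) - ?P j a" using Rb[of j] by linarith
        thus "\<bar>c j * (?P j a + (R j - 1))\<bar> \<le> \<bar>c j\<bar> * (?P j (a + w) - ?P j a)"
          by (simp add: abs_mult mult_left_mono)
      qed
      finally show ?thesis .
    qed
    have lim: "(B \<longlongrightarrow> 0) (at_right 0)"
    proof -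
      have "(B \<longlongrightarrow> (\<Sum>j\<in>{0..n}. \<bar>c j\<bar> * (?P j (a + 0) - ?P j a))) (at_right 0)"
        unfolding B_def
      proof (intro tendsto_intros)
        fix j
        have ic: "isCont (?P j) (a + 0)"
          using continuous_on_interior[OF incb_cont[OF Phi_incb[OF G]]] a by simp
        have "((\<lambda>w. a + w) \<longlongrightarrow> a + 0) (at_right (0::real))" by (intro tendsto_intros)
        thus "((\<lambda>w. ?P j (a + w)) \<longlongrightarrow> ?P j (a + 0)) (at_right 0)"
          by (rule isCont_tendsto_compose[OF ic])
      qed
      thus ?thesis by simp
    qed
    have ev: "\<forall>\<^sub>F w in at_right 0. \<bar>S a\<bar> \<le> B w"
      using eventually_at_right_real[of 0 "1 - a"] a by (auto elim!: eventually_mono intro: bound)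
    have "\<bar>S a\<bar> \<le> 0" by (rule tendsto_le[OF trivial_limit_at_right_real lim tendsto_const ev])
    thus ?thesis by simp
  qed
  have Sc: "continuous_on {-1..1} S" unfolding S_def
    by (intro continuous_intros incb_cont[OF Phi_incb[OF G]])
  have "\<forall>a\<in>{-1..1}. S a = 0"
  proof
    fix a :: real assume "a \<in> {-1..1}"
    thus "S a = 0"
      using continuous_constant_on_closure[of "{-1<..<1}" S 0 a] Sc Sz by simp
  qed
  thus ?thesis using ind unfolding indepK_def S_def by blast
qed


lemma GEN_G0: "f \<in> GEN n \<Longrightarrow> \<forall>k\<in>{1..n}. f k \<in> G0"
  unfolding GEN_def by simp

lemma construct:
  assumes fgen: "f \<in> GEN n"
  shows "\<exists>b\<in>G0. \<exists>\<delta>>0. \<forall>i\<in>{1..n}. Q b (f i) = \<delta> * y i"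
proof -
  have G: "\<forall>k\<in>{1..n}. f k \<in> G0" by (rule GEN_G0[OF fgen])
  interpret linsp LH "LL n f" by (rule linsp_LL[OF G])
  have nd: "\<not> (\<exists>c. (\<exists>j\<in>{0..n}. c j \<noteq> 0) \<and> (\<forall>x\<in>LH. (\<Sum>j\<in>{0..n}. c j * LL n f j x) = 0))"
    using nodep[OF G GEN_indep[OF fgen]] by blast
  hence surj: "\<forall>y. \<exists>x\<in>LH. \<forall>j\<in>{0..n}. LL n f j x = y j" using dual[of "{0..n}"] by blast
  obtain h where hLH: "h \<in> LH" and hL: "\<forall>j\<in>{0..n}. LL n f j h = (if j = 0 then 0 else y j)"
    using spec[OF surj, of "\<lambda>j. if j = 0 then 0 else y j"] by blast
  obtain M where M: "lipschitz_on M {-1..1} h" using hLH unfolding LH_def by blast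
  have M0: "M \<ge> 0" using M lipschitz_on_nonneg by blast
  have hc: "continuous_on {-1..1} h" by (rule LH_cont[OF hLH])
  have h01: "h (-1) = 0" "h 1 = 0" "\<And>t. t \<notin> {-1..1} \<Longrightarrow> h t = 0" using hLH unfolding LH_def by auto
  define \<delta> where "\<delta> = 1 / (M + 1)"
  have dpos: "\<delta> > 0" unfolding \<delta>_def using M0 by simp
  have dM: "\<delta> * M < 1" unfolding \<delta>_def using M0 by simp
  define b where "b = (\<lambda>t. t + \<delta> * h t)"
  have bc: "continuous_on {-1..1} b" unfolding b_def by (intro continuous_intros hc)
  have bm: "strict_mono_on {-1..1} b"
  proof (rule strict_mono_onI)
    fix s t :: real assume st: "s \<in> {-1..1}" "t \<in> {-1..1}" "s < t"
    have "\<bar>h t - h s\<bar> \<le> M * (t - s)"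
      using lipschitz_onD[OF M st(2) st(1)] st(3) by (simp add: dist_real_def)
    hence a1: "\<delta> * \<bar>h t - h s\<bar> \<le> \<delta> * (M * (t - s))" using dpos by (simp add: mult_left_mono)
    have a2: "\<delta> * (M * (t - s)) < t - s"
    proof -
      have "(\<delta> * M) * (t - s) < 1 * (t - s)" by (rule mult_strict_right_mono[OF dM]) (use st in simp)
      thus ?thesis by (simp add: mult.assoc)
    qed
    have a3: "- (\<delta> * \<bar>h t - h s\<bar>) \<le> \<delta> * (h t - h s)"
    proof -
      have "\<delta> * (- \<bar>h t - h s\<bar>) \<le> \<delta> * (h t - h s)" by (rule mult_left_mono) (use dpos in auto)
      thus ?thesis by simp
    qed
    show "b s < b t" unfolding b_def using a1 a2 a3 by (simp add: algebra_simps)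
  qed
  have binc: "incb b" unfolding incb_def using bc bm h01 by (simp add: b_def)
  have bG: "b \<in> Gset" unfolding Gset_def
    using bc bm h01 incb_maps[OF binc] by (auto simp: b_def)
  have hi: "h integrable_on {-1..1}" by (rule integrable_continuous_real[OF hc])
  have Lh0: "LL n f 0 h = integral {-1..1} h"
    unfolding LL_def by (rule integral_cong) (simp add: Phi_def iv_id)
  have "integral {-1..1} b = integral {-1..1} (\<lambda>t. t) + integral {-1..1} (\<lambda>t. \<delta> * h t)"
    unfolding b_def by (rule integral_add) (auto intro!: integrable_continuous_real continuous_intros hc)
  also have "\<dots> = 0" using int_id_zero Lh0 hL by simp
  finally have bG0: "b \<in> G0" unfolding G0_def using bG by simp
  have "\<forall>i\<in>{1..n}. Q b (f i) = \<delta> * y i"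
  proof
    fix i assume i: "i \<in> {1..n}"
    have fi: "incb (f i)" using G i G0_incb by blast
    have "Q b (f i) = integral {-1..1} (\<lambda>t. iv (f i) t + \<delta> * h (iv (f i) t))"
      unfolding Q_incb b_def by simp
    also have "\<dots> = integral {-1..1} (iv (f i)) + integral {-1..1} (\<lambda>t. \<delta> * h (iv (f i) t))"
      by (rule integral_add) (auto intro!: integrable_continuous_real continuous_intros cont_comp_iv[OF fi hc] incb_cont[OF incb_iv[OF fi]])
    also have "integral {-1..1} (\<lambda>t. \<delta> * h (iv (f i) t)) = \<delta> * LL n f i h"
      unfolding LL_def using i by (simp add: Phi_def)
    also have "LL n f i h = y i" using hL i by auto
    finally show "Q b (f i) = \<delta> * y i" using G0_int_iv G i by simp
  qed
  thus ?thesis using bG0 dpos by blast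
qed


lemma dual_basis:
  assumes K: "finite K" and pc: "\<And>k. k \<in> K \<Longrightarrow> continuous_on {-1..1} (p k)"
    and ind: "indepK K p"
  shows "\<exists>w. (\<forall>k. continuous_on {-1..1} (w k)) \<and> (\<forall>j\<in>K. \<forall>c. integral {-1..1} (\<lambda>t. w j t * (\<Sum>k\<in>K. c k * p k t)) = c j)"
proof -
  define H where "H = {h :: real \<Rightarrow> real. continuous_on {-1..1} h}"
  define L where "L = (\<lambda>j h. if j \<in> K then integral {-1..1} (\<lambda>t. h t * p j t) else 0)"
  have intg: "(\<lambda>t. h t * p j t) integrable_on {-1..1}" if "h \<in> H" "j \<in> K" for h j
    using that pc unfolding H_def by (auto intro!: integrable_continuous_real continuous_intros)
  interpret linsp H L
  proof
    show "(\<lambda>t. 0) \<in> H" unfolding H_def by simp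
    show "(\<lambda>t. x t + y t) \<in> H" if "x \<in> H" "y \<in> H" for x y using that unfolding H_def by (auto intro: continuous_intros)
    show "(\<lambda>t. c * x t) \<in> H" if "x \<in> H" for c x using that unfolding H_def by (auto intro: continuous_intros)
    show "L j (\<lambda>t. x t + y t) = L j x + L j y" if "x \<in> H" "y \<in> H" for j x y
    proof (cases "j \<in> K")
      case True
      have "integral {-1..1} (\<lambda>t. (x t + y t) * p j t) = integral {-1..1} (\<lambda>t. x t * p j t + y t * p j t)"
        by (simp add: algebra_simps)
      also have "\<dots> = integral {-1..1} (\<lambda>t. x t * p j t) + integral {-1..1} (\<lambda>t. y t * p j t)"
        by (rule integral_add) (use intg that True in auto)
      finally show ?thesis using True unfolding L_def by simp
    qed (simp add: L_def)
    show "L j (\<lambda>t. c * x t) = c * L j x" for j c x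
      unfolding L_def by (simp add: mult.assoc)
  qed
  have dep_false: "\<not> (\<exists>c. (\<exists>j\<in>K. c j \<noteq> 0) \<and> (\<forall>x\<in>H. (\<Sum>j\<in>K. c j * L j x) = 0))"
  proof
    assume "\<exists>c. (\<exists>j\<in>K. c j \<noteq> 0) \<and> (\<forall>x\<in>H. (\<Sum>j\<in>K. c j * L j x) = 0)"
    then obtain c where c: "\<exists>j\<in>K. c j \<noteq> 0" "\<forall>x\<in>H. (\<Sum>j\<in>K. c j * L j x) = 0" by blast
    define v where "v = (\<lambda>t. \<Sum>k\<in>K. c k * p k t)"
    have vc: "continuous_on {-1..1} v" unfolding v_def using pc by (auto intro!: continuous_intros)
    hence vH: "v \<in> H" unfolding H_def by simp
    have "integral {-1..1} (\<lambda>t. v t * v t) = integral {-1..1} (\<lambda>t. \<Sum>k\<in>K. c k * (v t * p k t))"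
      unfolding v_def by (simp add: sum_distrib_left algebra_simps)
    also have "\<dots> = (\<Sum>k\<in>K. integral {-1..1} (\<lambda>t. c k * (v t * p k t)))"
      by (rule integral_sum[OF K]) (auto intro!: integrable_continuous_real continuous_intros pc vc)
    also have "\<dots> = (\<Sum>k\<in>K. c k * L k v)"
      by (rule sum.cong) (auto simp: L_def)
    also have "\<dots> = 0" using c(2) vH by simp
    finally have "\<forall>t\<in>{-1..1}. v t = 0" using cont_sq_zero[OF vc] by blast
    hence "\<forall>k\<in>K. c k = 0" using ind unfolding indepK_def v_def by blast
    thus False using c(1) by blast
  qed
  hence surj: "\<forall>y. \<exists>x\<in>H. \<forall>j\<in>K. L j x = y j" using dual[OF K] by blast
  have "\<forall>k. \<exists>x\<in>H. \<forall>j\<in>K. L j x = (if j = k then 1 else 0)"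
  proof
    fix k show "\<exists>x\<in>H. \<forall>j\<in>K. L j x = (if j = k then 1 else 0)"
      using spec[OF surj, of "\<lambda>j. if j = k then 1 else 0"] by simp
  qed
  then obtain w where wH: "\<And>k. w k \<in> H" and wL: "\<And>k j. j \<in> K \<Longrightarrow> L j (w k) = (if j = k then 1 else 0)"
    by metis
  have wc: "continuous_on {-1..1} (w k)" for k using wH unfolding H_def by simp
  define E where "E = (\<lambda>k h. integral {-1..1} (\<lambda>t. w k t * h t))"
  have Ecoef: "E j (\<lambda>t. \<Sum>k\<in>K. c k * p k t) = c j" if j: "j \<in> K" for c j
  proof -
    have "E j (\<lambda>t. \<Sum>k\<in>K. c k * p k t) = integral {-1..1} (\<lambda>t. \<Sum>k\<in>K. c k * (w j t * p k t))"
      unfolding E_def by (simp add: sum_distrib_left algebra_simps)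
    also have "\<dots> = (\<Sum>k\<in>K. integral {-1..1} (\<lambda>t. c k * (w j t * p k t)))"
      by (rule integral_sum[OF K]) (auto intro!: integrable_continuous_real continuous_intros pc wc)
    also have "\<dots> = (\<Sum>k\<in>K. c k * L k (w j))"
      by (rule sum.cong) (auto simp: L_def)
    also have "\<dots> = (\<Sum>k\<in>K. c k * (if k = j then 1 else 0))"
      by (rule sum.cong) (auto simp: wL)
    also have "\<dots> = c j" using j K by (simp add: if_distrib cong: if_cong)
    finally show ?thesis .
  qed
  show ?thesis using wc Ecoef unfolding E_def by blast
qed

lemma span_point_bound:
  assumes K: "finite K" and pc: "\<And>k. k \<in> K \<Longrightarrow> continuous_on {-1..1} (p k)"
    and ind: "indepK K p" and t0: "t0 \<in> {-1..1}"
  shows "\<exists>C\<ge>0. \<forall>v. continuous_on {-1..1} v \<longrightarrow> inspan K p v \<longrightarrow> \<bar>v t0\<bar> \<le> C * integral {-1..1} (\<lambda>t. \<bar>v t\<bar>)"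
proof -
  obtain w where wc: "\<And>k. continuous_on {-1..1} (w k)"
    and wE: "\<And>j c. j \<in> K \<Longrightarrow> integral {-1..1} (\<lambda>t. w j t * (\<Sum>k\<in>K. c k * p k t)) = c j"
    using dual_basis[OF K pc ind] by blast
  have "\<forall>k. \<exists>B. \<forall>t\<in>{-1..1}. \<bar>w k t\<bar> \<le> B"
  proof
    fix k
    have "compact (w k ` {-1..1})" by (rule compact_continuous_image[OF wc]) simp
    then obtain B where "\<forall>x\<in>w k ` {-1..1}. norm x \<le> B" using compact_imp_bounded bounded_iff by metis
    thus "\<exists>B. \<forall>t\<in>{-1..1}. \<bar>w k t\<bar> \<le> B" by auto
  qed
  then obtain B where B: "\<And>k t. t \<in> {-1..1} \<Longrightarrow> \<bar>w k t\<bar> \<le> B k" by metis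
  have B0: "B k \<ge> 0" for k using B[of "-1" k] by simp
  define C where "C = (\<Sum>k\<in>K. B k * \<bar>p k t0\<bar>)"
  have C0: "C \<ge> 0" unfolding C_def using B0 by (simp add: sum_nonneg)
  have "\<forall>v. continuous_on {-1..1} v \<longrightarrow> inspan K p v \<longrightarrow> \<bar>v t0\<bar> \<le> C * integral {-1..1} (\<lambda>t. \<bar>v t\<bar>)"
  proof (intro allI impI)
    fix v assume vc: "continuous_on {-1..1} v" and sp: "inspan K p v"
    then obtain c where c: "\<forall>t\<in>{-1..1}. v t = (\<Sum>k\<in>K. c k * p k t)" unfolding inspan_def by blast
    have ck: "\<bar>c k\<bar> \<le> B k * integral {-1..1} (\<lambda>t. \<bar>v t\<bar>)" if k: "k \<in> K" for k
    proof -
      have "c k = integral {-1..1} (\<lambda>t. w k t * (\<Sum>j\<in>K. c j * p j t))" using wE[OF k] by simp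
      also have "\<dots> = integral {-1..1} (\<lambda>t. w k t * v t)"
        by (rule integral_cong) (use c in simp)
      finally have e: "c k = integral {-1..1} (\<lambda>t. w k t * v t)" .
      have "norm (integral {-1..1} (\<lambda>t. w k t * v t)) \<le> integral {-1..1} (\<lambda>t. B k * \<bar>v t\<bar>)"
      proof (rule integral_norm_bound_integral)
        show "(\<lambda>t. w k t * v t) integrable_on {-1..1}"
          by (auto intro!: integrable_continuous_real continuous_intros wc vc)
        show "(\<lambda>t. B k * \<bar>v t\<bar>) integrable_on {-1..1}"
          by (auto intro!: integrable_continuous_real continuous_intros vc)
        fix t :: real assume "t \<in> {-1..1}"
        thus "norm (w k t * v t) \<le> B k * \<bar>v t\<bar>"
          using B by (simp add: abs_mult mult_right_mono)
      qed
      thus ?thesis using e by simp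
    qed
    have "\<bar>v t0\<bar> = \<bar>\<Sum>k\<in>K. c k * p k t0\<bar>" using c t0 by simp
    also have "\<dots> \<le> (\<Sum>k\<in>K. \<bar>c k * p k t0\<bar>)" by (rule sum_abs)
    also have "\<dots> \<le> (\<Sum>k\<in>K. B k * integral {-1..1} (\<lambda>t. \<bar>v t\<bar>) * \<bar>p k t0\<bar>)"
      by (rule sum_mono) (simp add: abs_mult mult_right_mono ck)
    also have "\<dots> = C * integral {-1..1} (\<lambda>t. \<bar>v t\<bar>)"
      unfolding C_def sum_distrib_right by (rule sum.cong) (simp_all add: algebra_simps)
    finally show "\<bar>v t0\<bar> \<le> C * integral {-1..1} (\<lambda>t. \<bar>v t\<bar>)" .
  qed
  thus ?thesis using C0 by blast
qed


lemma perturb: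
  assumes hLH: "h \<in> LH" and hint: "integral {-1..1} h = 0"
  shows "\<exists>\<delta>>0. (\<lambda>t. t + \<delta> * h t) \<in> G0"
proof -
  obtain M where M: "lipschitz_on M {-1..1} h" using hLH unfolding LH_def by blast
  have M0: "M \<ge> 0" using M lipschitz_on_nonneg by blast
  have hc: "continuous_on {-1..1} h" by (rule LH_cont[OF hLH])
  have h01: "h (-1) = 0" "h 1 = 0" "\<And>t. t \<notin> {-1..1} \<Longrightarrow> h t = 0" using hLH unfolding LH_def by auto
  define \<delta> where "\<delta> = 1 / (M + 1)"
  have dpos: "\<delta> > 0" unfolding \<delta>_def using M0 by simp
  have dM: "\<delta> * M < 1" unfolding \<delta>_def using M0 by simp
  define b where "b = (\<lambda>t. t + \<delta> * h t)"
  have bc: "continuous_on {-1..1} b" unfolding b_def by (intro continuous_intros hc)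
  have bm: "strict_mono_on {-1..1} b"
  proof (rule strict_mono_onI)
    fix s t :: real assume st: "s \<in> {-1..1}" "t \<in> {-1..1}" "s < t"
    have "\<bar>h t - h s\<bar> \<le> M * (t - s)"
      using lipschitz_onD[OF M st(2) st(1)] st(3) by (simp add: dist_real_def)
    hence a1: "\<delta> * \<bar>h t - h s\<bar> \<le> \<delta> * (M * (t - s))" using dpos by (simp add: mult_left_mono)
    have a2: "\<delta> * (M * (t - s)) < t - s"
    proof -
      have "(\<delta> * M) * (t - s) < 1 * (t - s)" by (rule mult_strict_right_mono[OF dM]) (use st in simp)
      thus ?thesis by (simp add: mult.assoc)
    qed
    have a3: "- (\<delta> * \<bar>h t - h s\<bar>) \<le> \<delta> * (h t - h s)"
    proof -
      have "\<delta> * (- \<bar>h t - h s\<bar>) \<le> \<delta> * (h t - h s)" by (rule mult_left_mono) (use dpos in auto)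
      thus ?thesis by simp
    qed
    show "b s < b t" unfolding b_def using a1 a2 a3 by (simp add: algebra_simps)
  qed
  have binc: "incb b" unfolding incb_def using bc bm h01 by (simp add: b_def)
  have bG: "b \<in> Gset" unfolding Gset_def
    using bc bm h01 incb_maps[OF binc] by (auto simp: b_def)
  have "integral {-1..1} b = integral {-1..1} (\<lambda>t. t) + integral {-1..1} (\<lambda>t. \<delta> * h t)"
    unfolding b_def by (rule integral_add) (auto intro!: integrable_continuous_real continuous_intros hc)
  also have "\<dots> = 0" using int_id_zero hint by simp
  finally have "b \<in> G0" unfolding G0_def using bG by simp
  thus ?thesis using dpos unfolding b_def by blast
qed

definition tent :: "real \<Rightarrow> real \<Rightarrow> real \<Rightarrow> real" where
  "tent c k s = max 0 (1 - \<bar>s - c\<bar> * k)"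

lemma tent_lip: "k \<ge> 0 \<Longrightarrow> \<bar>tent c k x - tent c k y\<bar> \<le> k * \<bar>x - y\<bar>"
proof -
  assume k: "k \<ge> 0"
  have "\<bar>tent c k x - tent c k y\<bar> \<le> \<bar>(1 - \<bar>x - c\<bar> * k) - (1 - \<bar>y - c\<bar> * k)\<bar>"
    unfolding tent_def by (simp add: max_def)
  also have "\<dots> = \<bar>k * (\<bar>y - c\<bar> - \<bar>x - c\<bar>)\<bar>" by (simp add: algebra_simps)
  also have "\<dots> = k * \<bar>\<bar>y - c\<bar> - \<bar>x - c\<bar>\<bar>" using k by (simp add: abs_mult)
  also have "\<dots> \<le> k * \<bar>x - y\<bar>"
    by (rule mult_left_mono[OF _ k]) linarith
  finally show ?thesis .
qed

lemma tent_cont: "continuous_on S (tent c k)"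
  unfolding tent_def by (intro continuous_intros)

lemma tent01: "0 \<le> tent c k s" "k \<ge> 0 \<Longrightarrow> tent c k s \<le> 1"
  unfolding tent_def by auto

lemma tent_int_ub:
  assumes e: "0 < e" "-1 \<le> c - e" "c + e \<le> 1"
  shows "integral {-1..1} (tent c (1 / e)) \<le> 2 * e"
proof -
  let ?g = "tent c (1 / e)"
  have gi: "?g integrable_on {x..y}" for x y by (rule integrable_continuous_real[OF tent_cont])
  have c1: "integral {-1..c - e} ?g + integral {c - e..1} ?g = integral {-1..1} ?g"
    by (rule Henstock_Kurzweil_Integration.integral_combine) (use e gi in auto)
  have c2: "integral {c - e..c + e} ?g + integral {c + e..1} ?g = integral {c - e..1} ?g"
    by (rule Henstock_Kurzweil_Integration.integral_combine) (use e gi in auto)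
  have z: "?g s = 0" if "\<bar>s - c\<bar> \<ge> e" for s
  proof -
    have "\<bar>s - c\<bar> * (1 / e) \<ge> 1" using that e by (simp add: field_simps)
    thus ?thesis unfolding tent_def by simp
  qed
  have I1: "integral {-1..c - e} ?g = 0"
  proof -
    have "integral {-1..c - e} ?g = integral {-1..c - e} (\<lambda>_. 0::real)"
      by (rule integral_cong) (rule z, auto)
    thus ?thesis by simp
  qed
  have I3: "integral {c + e..1} ?g = 0"
  proof -
    have "integral {c + e..1} ?g = integral {c + e..1} (\<lambda>_. 0::real)"
      by (rule integral_cong) (rule z, auto)
    thus ?thesis by simp
  qed
  have "integral {c - e..c + e} ?g \<le> integral {c - e..c + e} (\<lambda>_. 1::real)"
    by (rule integral_le) (use gi e tent01 in auto)
  hence "integral {c - e..c + e} ?g \<le> 2 * e" using e by simp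
  thus ?thesis using c1 c2 I1 I3 by linarith
qed

lemma narrow:
  assumes e: "0 < e" "e \<le> 1/8"
  shows "\<exists>h\<in>LH. integral {-1..1} h = 0 \<and> h (-1/2) = 1 \<and> h (1/2) = 0 \<and> integral {-1..1} (\<lambda>t. \<bar>h t\<bar>) \<le> 4 * e"
proof -
  define T1 where "T1 = tent (-1/2) (1 / e)"
  define T2 where "T2 = tent 0 4"
  have T1c: "continuous_on {-1..1} T1" and T2c: "continuous_on {-1..1} T2"
    unfolding T1_def T2_def by (rule tent_cont)+
  define I1 where "I1 = integral {-1..1} T1"
  define I2 where "I2 = integral {-1..1} T2"
  have I1u: "I1 \<le> 2 * e" unfolding I1_def T1_def by (rule tent_int_ub) (use e in auto)
  have I2p: "I2 > 0"
  proof -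
    have "I2 \<ge> 0" unfolding I2_def
      by (rule integral_nonneg) (use integrable_continuous_real[OF T2c] in \<open>auto simp: tent01\<close>, simp add: T2_def tent01)
    moreover have "I2 \<noteq> 0"
    proof
      assume "I2 = 0"
      hence i: "(T2 has_integral 0) (cbox (-1) 1)"
        unfolding I2_def using integrable_continuous_real[OF T2c]
        by (metis cbox_interval has_integral_integral)
      have "T2 0 = 0"
        by (rule has_integral_0_cbox_imp_0[OF _ _ i]) (auto simp: T2_def tent01 intro: tent_cont)
      thus False unfolding T2_def tent_def by simp
    qed
    ultimately show ?thesis by simp
  qed
  define lam where "lam = I1 / I2"
  have lam0: "lam \<ge> 0" unfolding lam_def using I2p
    by (simp add: I1_def T1_def integral_nonneg integrable_continuous_real tent_cont tent01)
  define h where "h = (\<lambda>s. if s \<in> {-1..1} then T1 s - lam * T2 s else 0)"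
  have e8: "1 / e \<ge> 8" using e by (simp add: field_simps)
  have T1e: "T1 (-1) = 0" "T1 1 = 0" "T1 (-1/2) = 1" "T1 (1/2) = 0"
    unfolding T1_def tent_def using e8 by auto
  have T2e: "T2 (-1) = 0" "T2 1 = 0" "T2 (-1/2) = 0" "T2 (1/2) = 0"
    unfolding T2_def tent_def by auto
  have hlip: "lipschitz_on (1 / e + lam * 4) {-1..1} h"
  proof (rule lipschitz_onI)
    fix x y :: real assume xy: "x \<in> {-1..1}" "y \<in> {-1..1}"
    have "dist (h x) (h y) = \<bar>(T1 x - T1 y) - lam * (T2 x - T2 y)\<bar>"
      using xy unfolding h_def dist_real_def by (simp add: algebra_simps)
    also have "\<dots> \<le> \<bar>T1 x - T1 y\<bar> + lam * \<bar>T2 x - T2 y\<bar>"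
      using abs_triangle_ineq4[of "T1 x - T1 y" "lam * (T2 x - T2 y)"] lam0 by (simp add: abs_mult)
    also have "\<dots> \<le> (1 / e) * \<bar>x - y\<bar> + lam * (4 * \<bar>x - y\<bar>)"
      using tent_lip[of "1/e" "-1/2" x y] tent_lip[of 4 0 x y] e lam0 unfolding T1_def T2_def
      by (intro add_mono mult_left_mono) auto
    also have "\<dots> = (1 / e + lam * 4) * dist x y" by (simp add: dist_real_def algebra_simps)
    finally show "dist (h x) (h y) \<le> (1 / e + lam * 4) * dist x y" .
  next
    show "0 \<le> 1 / e + lam * 4" using e lam0 by simp
  qed
  have hLH: "h \<in> LH" unfolding LH_def using hlip T1e T2e by (auto simp: h_def)
  have hint: "integral {-1..1} h = 0"
  proof -
    have "integral {-1..1} h = integral {-1..1} (\<lambda>s. T1 s - lam * T2 s)"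
      by (rule integral_cong) (simp add: h_def)
    also have "\<dots> = I1 - lam * I2" unfolding I1_def I2_def
      by (subst integral_diff) (auto intro!: integrable_continuous_real continuous_intros T1c T2c)
    also have "\<dots> = 0" unfolding lam_def using I2p by simp
    finally show ?thesis .
  qed
  have habs: "integral {-1..1} (\<lambda>t. \<bar>h t\<bar>) \<le> 4 * e"
  proof -
    have "integral {-1..1} (\<lambda>t. \<bar>h t\<bar>) \<le> integral {-1..1} (\<lambda>s. T1 s + lam * T2 s)"
    proof (rule integral_le)
      show "(\<lambda>t. \<bar>h t\<bar>) integrable_on {-1..1}"
        using LH_cont[OF hLH] by (auto intro!: integrable_continuous_real continuous_intros)
      show "(\<lambda>s. T1 s + lam * T2 s) integrable_on {-1..1}"
        by (auto intro!: integrable_continuous_real continuous_intros T1c T2c)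
      fix s :: real assume "s \<in> {-1..1}"
      moreover have "0 \<le> T1 s" "0 \<le> T2 s" unfolding T1_def T2_def by (simp_all add: tent01)
      ultimately show "\<bar>h s\<bar> \<le> T1 s + lam * T2 s" using lam0 unfolding h_def by (simp add: abs_le_iff)
    qed
    also have "\<dots> = I1 + lam * I2" unfolding I1_def I2_def
      by (subst integral_add) (auto intro!: integrable_continuous_real continuous_intros T1c T2c)
    also have "\<dots> = 2 * I1" unfolding lam_def using I2p by simp
    also have "\<dots> \<le> 4 * e" using I1u by simp
    finally show ?thesis .
  qed
  have "h (-1/2) = 1" "h (1/2) = 0" unfolding h_def using T1e T2e by auto
  thus ?thesis using hLH hint habs by blast
qed


lemma Phi_cont: "\<forall>k\<in>{1..n}. f k \<in> G0 \<Longrightarrow> continuous_on {-1..1} (Phi n f k)"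
  using incb_cont[OF Phi_incb] by blast

lemma even_part_cont: "continuous_on {-1..1} g \<Longrightarrow> continuous_on {-1..1} (even_part g)"
proof -
  assume g: "continuous_on {-1..1} g"
  have "continuous_on {-1..1} (\<lambda>t. g (- t))"
    by (rule continuous_on_compose2[OF g]) (auto intro: continuous_intros)
  thus ?thesis unfolding even_part_def[abs_def] using g by (intro continuous_intros) auto
qed

lemma exists_NS:
  assumes fgen: "f \<in> GEN n"
  shows "\<exists>b\<in>G0. \<not> inspan {0..n} (Phi n f) b"
proof -
  have G: "\<forall>k\<in>{1..n}. f k \<in> G0" by (rule GEN_G0[OF fgen])
  obtain C where C0: "C \<ge> 0" and C: "\<And>v. continuous_on {-1..1} v \<Longrightarrow> inspan {0..n} (Phi n f) v \<Longrightarrow> \<bar>v (-1/2)\<bar> \<le> C * integral {-1..1} (\<lambda>t. \<bar>v t\<bar>)"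
    using span_point_bound[of "{0..n}" "Phi n f" "-1/2"] Phi_cont[OF G] GEN_indep[OF fgen] by auto
  define e where "e = min (1/8) (1 / (8 * (C + 1)))"
  have e: "0 < e" "e \<le> 1/8" "e \<le> 1 / (8 * (C + 1))" unfolding e_def using C0 by auto
  obtain h where hLH: "h \<in> LH" and hi: "integral {-1..1} h = 0" and hm: "h (-1/2) = 1"
    and ha: "integral {-1..1} (\<lambda>t. \<bar>h t\<bar>) \<le> 4 * e"
    using narrow[OF e(1,2)] by blast
  obtain \<delta> where dpos: "\<delta> > 0" and bG: "(\<lambda>t. t + \<delta> * h t) \<in> G0" using perturb[OF hLH hi] by blast
  have "\<not> inspan {0..n} (Phi n f) (\<lambda>t. t + \<delta> * h t)"
  proof
    assume sb: "inspan {0..n} (Phi n f) (\<lambda>t. t + \<delta> * h t)"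
    have sid: "inspan {0..n} (Phi n f) (\<lambda>t. t)"
      unfolding inspan_def
    proof (intro exI[of _ "\<lambda>k. if k = 0 then 1 else 0"] ballI)
      fix t :: real
      have "(\<Sum>k\<in>{0..n}. (if k = 0 then 1 else 0) * Phi n f k t) = (\<Sum>k\<in>{0..n}. if k = 0 then Phi n f k t else 0)"
        by (rule sum.cong) auto
      also have "\<dots> = Phi n f 0 t" by (simp add: sum.delta)
      also have "\<dots> = t" by (simp add: Phi_def)
      finally show "t = (\<Sum>k\<in>{0..n}. (if k = 0 then 1 else 0) * Phi n f k t)" by simp
    qed
    have "inspan {0..n} (Phi n f) (\<lambda>t. (1 / \<delta>) * (t + \<delta> * h t) + (- 1 / \<delta>) * t)"
      by (rule inspan_comb[OF sb sid])
    moreover have "(\<lambda>t. (1 / \<delta>) * (t + \<delta> * h t) + (- 1 / \<delta>) * t) = h"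
      using dpos by (auto simp: field_simps)
    ultimately have "inspan {0..n} (Phi n f) h" by simp
    hence "\<bar>h (-1/2)\<bar> \<le> C * integral {-1..1} (\<lambda>t. \<bar>h t\<bar>)" using C LH_cont[OF hLH] by blast
    also have "\<dots> \<le> C * (4 * e)" using ha C0 by (simp add: mult_left_mono)
    also have "\<dots> \<le> C * (4 * (1 / (8 * (C + 1))))" by (intro mult_left_mono) (use e(3) C0 in auto)
    also have "\<dots> < 1" using C0 by (simp add: field_simps)
    finally show False using hm by simp
  qed
  thus ?thesis using bG by blast
qed

lemma GENp_G0: "f \<in> GENp n \<Longrightarrow> \<forall>k\<in>{1..n}. f k \<in> G0"
  unfolding GENp_def by simp

lemma GENp_indep: "f \<in> GENp n \<Longrightarrow> indepK {1..n} (\<lambda>k. even_part (f k))"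
  unfolding GENp_def indepK_def by simp

lemma G0_cont: "g \<in> G0 \<Longrightarrow> continuous_on {-1..1} g"
  using incb_cont[OF G0_incb] by blast

lemma exists_NSp:
  assumes fgen: "f \<in> GENp n"
  shows "\<exists>b\<in>G0. \<not> inspan {1..n} (\<lambda>k. even_part (f k)) (even_part b)"
proof -
  have G: "\<forall>k\<in>{1..n}. f k \<in> G0" by (rule GENp_G0[OF fgen])
  have pc: "\<And>k. k \<in> {1..n} \<Longrightarrow> continuous_on {-1..1} (even_part (f k))"
    using G G0_cont even_part_cont by blast
  obtain C where C0: "C \<ge> 0" and C: "\<And>v. continuous_on {-1..1} v \<Longrightarrow> inspan {1..n} (\<lambda>k. even_part (f k)) v \<Longrightarrow> \<bar>v (-1/2)\<bar> \<le> C * integral {-1..1} (\<lambda>t. \<bar>v t\<bar>)"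
    using span_point_bound[of "{1..n}" "\<lambda>k. even_part (f k)" "-1/2"] pc GENp_indep[OF fgen] by auto
  define e where "e = min (1/8) (1 / (16 * (C + 1)))"
  have e: "0 < e" "e \<le> 1/8" "e \<le> 1 / (16 * (C + 1))" unfolding e_def using C0 by auto
  obtain h where hLH: "h \<in> LH" and hi: "integral {-1..1} h = 0" and hm: "h (-1/2) = 1" "h (1/2) = 0"
    and ha: "integral {-1..1} (\<lambda>t. \<bar>h t\<bar>) \<le> 4 * e"
    using narrow[OF e(1,2)] by blast
  have hc: "continuous_on {-1..1} h" by (rule LH_cont[OF hLH])
  obtain \<delta> where dpos: "\<delta> > 0" and bG: "(\<lambda>t. t + \<delta> * h t) \<in> G0" using perturb[OF hLH hi] by blast
  have "\<not> inspan {1..n} (\<lambda>k. even_part (f k)) (even_part (\<lambda>t. t + \<delta> * h t))"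
  proof
    assume sb: "inspan {1..n} (\<lambda>k. even_part (f k)) (even_part (\<lambda>t. t + \<delta> * h t))"
    have "inspan {1..n} (\<lambda>k. even_part (f k)) (\<lambda>t. (1 / \<delta>) * even_part (\<lambda>t. t + \<delta> * h t) t + 0 * even_part (\<lambda>t. t + \<delta> * h t) t)"
      by (rule inspan_comb[OF sb sb])
    moreover have "(\<lambda>t. (1 / \<delta>) * even_part (\<lambda>t. t + \<delta> * h t) t + 0 * even_part (\<lambda>t. t + \<delta> * h t) t) = even_part h"
      using dpos by (auto simp: field_simps even_part_def)
    ultimately have sp: "inspan {1..n} (\<lambda>k. even_part (f k)) (even_part h)" by simp
    have "1/2 = \<bar>even_part h (-1/2)\<bar>" using hm by (simp add: even_part_def)
    also have "\<dots> \<le> C * integral {-1..1} (\<lambda>t. \<bar>even_part h t\<bar>)" using C[OF even_part_cont[OF hc] sp] .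
    also have "\<dots> \<le> C * integral {-1..1} (\<lambda>t. \<bar>h t\<bar>)"
    proof (rule mult_left_mono[OF _ C0])
      have hmc: "continuous_on {-1..1} (\<lambda>t. h (- t))"
        by (rule continuous_on_compose2[OF hc]) (auto intro: continuous_intros)
      have "integral {-1..1} (\<lambda>t. \<bar>even_part h t\<bar>) \<le> integral {-1..1} (\<lambda>t. (\<bar>h t\<bar> + \<bar>h (- t)\<bar>) / 2)"
        by (rule integral_le)
          (auto intro!: integrable_continuous_real continuous_intros even_part_cont hc hmc simp: even_part_def)
      also have "\<dots> = (integral {-1..1} (\<lambda>t. \<bar>h t\<bar>) + integral {-1..1} (\<lambda>t. \<bar>h (- t)\<bar>)) / 2"
        unfolding Henstock_Kurzweil_Integration.integral_divide
        by (subst integral_add) (auto intro!: integrable_continuous_real continuous_intros hc hmc)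
      also have "integral {-1..1} (\<lambda>t. \<bar>h (- t)\<bar>) = integral {-1..1} (\<lambda>t. \<bar>h t\<bar>)"
        using Henstock_Kurzweil_Integration.integral_reflect_real[of 1 "-1" "\<lambda>t. \<bar>h t\<bar>"] by simp
      finally show "integral {-1..1} (\<lambda>t. \<bar>even_part h t\<bar>) \<le> integral {-1..1} (\<lambda>t. \<bar>h t\<bar>)" by simp
    qed
    also have "\<dots> \<le> C * (4 * e)" using ha C0 by (simp add: mult_left_mono)
    also have "\<dots> \<le> C * (4 * (1 / (16 * (C + 1))))" by (intro mult_left_mono) (use e(3) C0 in auto)
    also have "\<dots> < 1/2" using C0 by (simp add: field_simps)
    finally show False by simp
  qed
  thus ?thesis using bG by blast
qed


lemma sum_Phi: "(\<Sum>k\<in>{0..n}. c k * Phi n f k t) = c 0 * t + (\<Sum>k=1..n. c k * f k t)"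
proof -
  have "(\<Sum>k\<in>{0..n}. c k * Phi n f k t) = c 0 * Phi n f 0 t + (\<Sum>k\<in>{Suc 0..n}. c k * Phi n f k t)"
    by (rule sum.atLeast_Suc_atMost) simp
  also have "(\<Sum>k\<in>{Suc 0..n}. c k * Phi n f k t) = (\<Sum>k=1..n. c k * f k t)"
    by (rule sum.cong) (auto simp: Phi_def)
  finally show ?thesis by (simp add: Phi_def)
qed

lemma GEN_iff:
  "f \<in> GEN n \<longleftrightarrow> (\<forall>k\<in>{1..n}. f k \<in> G0) \<and> indepK {0..n} (Phi n f)
     \<and> (\<forall>i\<in>{1..n}. \<forall>j\<in>{1..n}. i \<noteq> j \<longrightarrow> Q (f i) (f j) \<noteq> 0)"
proof
  assume f: "f \<in> GEN n"
  thus "(\<forall>k\<in>{1..n}. f k \<in> G0) \<and> indepK {0..n} (Phi n f) \<and> (\<forall>i\<in>{1..n}. \<forall>j\<in>{1..n}. i \<noteq> j \<longrightarrow> Q (f i) (f j) \<noteq> 0)"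
    using GEN_indep[OF f] unfolding GEN_def by simp
next
  assume A: "(\<forall>k\<in>{1..n}. f k \<in> G0) \<and> indepK {0..n} (Phi n f) \<and> (\<forall>i\<in>{1..n}. \<forall>j\<in>{1..n}. i \<noteq> j \<longrightarrow> Q (f i) (f j) \<noteq> 0)"
  have "\<forall>c0 c. (\<forall>t\<in>{-1..1}. c0 * t + (\<Sum>k=1..n. c k * f k t) = 0) \<longrightarrow> c0 = 0 \<and> (\<forall>k\<in>{1..n}. c k = 0)"
  proof (intro allI impI)
    fix c0 c assume h: "\<forall>t\<in>{-1..1}. c0 * t + (\<Sum>k=1..n. c k * f k t) = 0"
    let ?c = "c(0 := c0)"
    have "(\<Sum>k=1..n. ?c k * f k t) = (\<Sum>k=1..n. c k * f k t)" for t by (rule sum.cong) auto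
    hence "\<forall>t\<in>{-1..1}. (\<Sum>k\<in>{0..n}. ?c k * Phi n f k t) = 0" using h sum_Phi[of ?c n f] by simp
    hence z: "\<forall>k\<in>{0..n}. ?c k = 0" using A unfolding indepK_def by blast
    show "c0 = 0 \<and> (\<forall>k\<in>{1..n}. c k = 0)"
    proof
      show "c0 = 0" using z[rule_format, of 0] by simp
      show "\<forall>k\<in>{1..n}. c k = 0" using z by force
    qed
  qed
  thus "f \<in> GEN n" using A unfolding GEN_def by simp
qed

lemma GENp_iff:
  "f \<in> GENp n \<longleftrightarrow> (\<forall>k\<in>{1..n}. f k \<in> G0) \<and> indepK {1..n} (\<lambda>k. even_part (f k))
     \<and> (\<forall>i\<in>{1..n}. \<forall>j\<in>{1..n}. i \<noteq> j \<longrightarrow> Q (f i) (f j) \<noteq> 0)"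
  unfolding GENp_def indepK_def by simp

lemma Q_G0_antisym: "a \<in> G0 \<Longrightarrow> b \<in> G0 \<Longrightarrow> Q a b = - Q b a"
  using Q_antisym G0_incb by blast

lemma Qcond_ext:
  fixes n :: nat
  assumes G: "\<forall>k\<in>{1..n}. f k \<in> G0" and g: "g \<in> G0"
    and Qf: "\<forall>i\<in>{1..n}. \<forall>j\<in>{1..n}. i \<noteq> j \<longrightarrow> Q (f i) (f j) \<noteq> 0"
  shows "(\<forall>i\<in>{1..n+1}. \<forall>j\<in>{1..n+1}. i \<noteq> j \<longrightarrow> Q ((f(n+1 := g)) i) ((f(n+1 := g)) j) \<noteq> 0)
         \<longleftrightarrow> (\<forall>i\<in>{1..n}. Q g (f i) \<noteq> 0)"
proof
  assume A: "\<forall>i\<in>{1..n+1}. \<forall>j\<in>{1..n+1}. i \<noteq> j \<longrightarrow> Q ((f(n+1 := g)) i) ((f(n+1 := g)) j) \<noteq> 0"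
  show "\<forall>i\<in>{1..n}. Q g (f i) \<noteq> 0"
  proof
    fix i assume i: "i \<in> {1..n}"
    have "n+1 \<in> {1..n+1}" "i \<in> {1..n+1}" "n+1 \<noteq> i" using i by auto
    hence "Q ((f(n+1 := g)) (n+1)) ((f(n+1 := g)) i) \<noteq> 0" using A by blast
    thus "Q g (f i) \<noteq> 0" using i by simp
  qed
next
  assume B: "\<forall>i\<in>{1..n}. Q g (f i) \<noteq> 0"
  show "\<forall>i\<in>{1..n+1}. \<forall>j\<in>{1..n+1}. i \<noteq> j \<longrightarrow> Q ((f(n+1 := g)) i) ((f(n+1 := g)) j) \<noteq> 0"
  proof (intro ballI impI)
    fix i j assume i: "i \<in> {1..n+1}" and j: "j \<in> {1..n+1}" and ij: "i \<noteq> j"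
    show "Q ((f(n+1 := g)) i) ((f(n+1 := g)) j) \<noteq> 0"
    proof (cases "i = n+1")
      case True
      hence "j \<in> {1..n}" using j ij by auto
      thus ?thesis using True B by simp
    next
      case False
      hence i': "i \<in> {1..n}" using i by auto
      show ?thesis
      proof (cases "j = n+1")
        case True
        thus ?thesis using i' B Q_G0_antisym[OF _ g, of "f i"] G by auto
      next
        case False
        hence "j \<in> {1..n}" using j by auto
        thus ?thesis using i' Qf ij \<open>i \<noteq> n+1\<close> False by simp
      qed
    qed
  qed
qed

lemma G0_ext: "\<forall>k\<in>{1..(n::nat)}. f k \<in> G0 \<Longrightarrow> g \<in> G0 \<Longrightarrow> \<forall>k\<in>{1..n+1}. (f(n+1 := g)) k \<in> G0"
proof
  fix k assume G: "\<forall>k\<in>{1..n}. f k \<in> G0" and g: "g \<in> G0" and k: "k \<in> {1..n+1}"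
  show "(f(n+1 := g)) k \<in> G0"
  proof (cases "k = n+1")
    case False
    hence "k \<in> {1..n}" using k by auto
    thus ?thesis using G False by simp
  qed (simp add: g)
qed

lemma GEN_ext:
  assumes f: "f \<in> GEN n" and g: "g \<in> G0"
  shows "f(n+1 := g) \<in> GEN (n+1) \<longleftrightarrow> \<not> inspan {0..n} (Phi n f) g \<and> (\<forall>i\<in>{1..n}. Q g (f i) \<noteq> 0)"
proof -
  have G: "\<forall>k\<in>{1..n}. f k \<in> G0" and ind: "indepK {0..n} (Phi n f)"
    and Qf: "\<forall>i\<in>{1..n}. \<forall>j\<in>{1..n}. i \<noteq> j \<longrightarrow> Q (f i) (f j) \<noteq> 0"
    using f unfolding GEN_iff by auto
  have "indepK {0..n+1} (Phi (n+1) (f(n+1 := g))) = indepK (insert (n+1) {0..n}) ((Phi n f)(n+1 := g))"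
  proof -
    have s: "{0..n+1} = insert (n+1) {0..n}" by auto
    show ?thesis unfolding s by (rule indepK_cong) (auto simp: Phi_def)
  qed
  also have "\<dots> \<longleftrightarrow> \<not> inspan {0..n} (Phi n f) g" by (rule indepK_insert[OF _ _ ind]) auto
  finally show ?thesis
    unfolding GEN_iff[of "f(n+1 := g)" "n+1"] using G0_ext[OF G g] Qcond_ext[OF G g Qf] by blast
qed

lemma GENp_ext:
  assumes f: "f \<in> GENp n" and g: "g \<in> G0"
  shows "f(n+1 := g) \<in> GENp (n+1) \<longleftrightarrow> \<not> inspan {1..n} (\<lambda>k. even_part (f k)) (even_part g) \<and> (\<forall>i\<in>{1..n}. Q g (f i) \<noteq> 0)"
proof -
  have G: "\<forall>k\<in>{1..n}. f k \<in> G0" and ind: "indepK {1..n} (\<lambda>k. even_part (f k))"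
    and Qf: "\<forall>i\<in>{1..n}. \<forall>j\<in>{1..n}. i \<noteq> j \<longrightarrow> Q (f i) (f j) \<noteq> 0"
    using f unfolding GENp_iff by auto
  have "indepK {1..n+1} (\<lambda>k. even_part ((f(n+1 := g)) k)) = indepK (insert (n+1) {1..n}) ((\<lambda>k. even_part (f k))(n+1 := even_part g))"
  proof -
    have s: "{1..n+1} = insert (n+1) {1..n}" by auto
    show ?thesis unfolding s by (rule indepK_cong) auto
  qed
  also have "\<dots> \<longleftrightarrow> \<not> inspan {1..n} (\<lambda>k. even_part (f k)) (even_part g)" by (rule indepK_insert[OF _ _ ind]) auto
  finally show ?thesis
    unfolding GENp_iff[of "f(n+1 := g)" "n+1"] using G0_ext[OF G g] Qcond_ext[OF G g Qf] by blast
qed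

lemma Rel_ext:
  fixes n :: nat
  assumes G: "\<forall>k\<in>{1..n}. f k \<in> G0" and g: "g \<in> G0"
    and tour: "tournament {1..n+1} R" and restr: "R \<inter> ({1..n} \<times> {1..n}) = Rel n f"
    and Qnz: "\<forall>i\<in>{1..n}. Q g (f i) \<noteq> 0"
  shows "Rel (n+1) (f(n+1 := g)) = R \<longleftrightarrow> (\<forall>i\<in>{1..n}. (Q g (f i) > 0 \<longleftrightarrow> (i, n+1) \<in> R))"
proof
  assume A: "Rel (n+1) (f(n+1 := g)) = R"
  show "\<forall>i\<in>{1..n}. (Q g (f i) > 0 \<longleftrightarrow> (i, n+1) \<in> R)"
  proof
    fix i assume i: "i \<in> {1..n}"
    have "(i, n+1) \<in> Rel (n+1) (f(n+1 := g)) \<longleftrightarrow> Q g (f i) > 0" using i unfolding Rel_def by auto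
    thus "Q g (f i) > 0 \<longleftrightarrow> (i, n+1) \<in> R" using A by simp
  qed
next
  assume B: "\<forall>i\<in>{1..n}. (Q g (f i) > 0 \<longleftrightarrow> (i, n+1) \<in> R)"
  have RI: "R \<subseteq> {1..n+1} \<times> {1..n+1}" and Rirr: "\<And>i. (i, i) \<notin> R"
    and Rt: "\<And>i j. i \<in> {1..n+1} \<Longrightarrow> j \<in> {1..n+1} \<Longrightarrow> i \<noteq> j \<Longrightarrow> (i, j) \<in> R \<longleftrightarrow> (j, i) \<notin> R"
  proof -
    have T: "R \<subseteq> {1..n+1} \<times> {1..n+1} \<and> (\<forall>i. (i, i) \<notin> R)
     \<and> (\<forall>i\<in>{1..n+1}. \<forall>j\<in>{1..n+1}. i \<noteq> j \<longrightarrow> ((i, j) \<in> R \<longleftrightarrow> (j, i) \<notin> R))"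
      using tour unfolding tournament_def .
    show "R \<subseteq> {1..n+1} \<times> {1..n+1}" using T by (rule conjunct1)
    show "\<And>i. (i, i) \<notin> R" using T by blast
    show "\<And>i j. i \<in> {1..n+1} \<Longrightarrow> j \<in> {1..n+1} \<Longrightarrow> i \<noteq> j \<Longrightarrow> (i, j) \<in> R \<longleftrightarrow> (j, i) \<notin> R"
      using T by blast
  qed
  show "Rel (n+1) (f(n+1 := g)) = R"
  proof (rule set_eqI)
    fix x :: "nat \<times> nat"
    obtain a b where x: "x = (a, b)" by (cases x)
    show "x \<in> Rel (n+1) (f(n+1 := g)) \<longleftrightarrow> x \<in> R"
    proof (cases "a \<in> {1..n+1} \<and> b \<in> {1..n+1}")
      case False
      hence "x \<notin> R" using RI x by blast
      moreover have "x \<notin> Rel (n+1) (f(n+1 := g))" using False x unfolding Rel_def by blast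
      ultimately show ?thesis by blast
    next
      case True
      hence ab: "a \<in> {1..n+1}" "b \<in> {1..n+1}" by auto
      have relx: "x \<in> Rel (n+1) (f(n+1 := g)) \<longleftrightarrow> Q ((f(n+1 := g)) b) ((f(n+1 := g)) a) > 0"
        using ab x unfolding Rel_def by auto
      show ?thesis
      proof (cases "a = n+1")
        case a: True
        show ?thesis
        proof (cases "b = n+1")
          case True
          have "Q g g = 0" using Q_G0_antisym[OF g g] by simp
          thus ?thesis using relx a True Rirr x by simp
        next
          case False
          hence b': "b \<in> {1..n}" using ab by auto
          have "Q (f b) g = - Q g (f b)" using Q_G0_antisym G b' g by blast
          moreover have "Q g (f b) \<noteq> 0" using Qnz b' by blast
          ultimately have "Q (f b) g > 0 \<longleftrightarrow> \<not> Q g (f b) > 0" by linarith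
          also have "\<dots> \<longleftrightarrow> (b, n+1) \<notin> R" using B b' by simp
          also have "\<dots> \<longleftrightarrow> (n+1, b) \<in> R" using Rt[of "n+1" b] ab False by auto
          finally show ?thesis using relx a False x by simp
        qed
      next
        case a: False
        hence a': "a \<in> {1..n}" using ab by auto
        show ?thesis
        proof (cases "b = n+1")
          case True
          thus ?thesis using relx a B a' x by simp
        next
          case False
          hence b': "b \<in> {1..n}" using ab by auto
          have "x \<in> R \<longleftrightarrow> x \<in> Rel n f" using restr a' b' x by blast
          also have "\<dots> \<longleftrightarrow> Q (f b) (f a) > 0" using a' b' x unfolding Rel_def by auto
          finally show ?thesis using relx a False by simp
        qed
      qed
    qed
  qed
qed


lemma sd_ub: "(\<And>t. t \<in> {-1..1} \<Longrightarrow> \<bar>f t - g t\<bar> \<le> B) \<Longrightarrow> supdist f g \<le> B"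
  unfolding supdist_def by (rule cSUP_least) auto

lemma sd_lb:
  assumes "f \<in> G0" "g \<in> G0" "t \<in> {-1..1}"
  shows "\<bar>f t - g t\<bar> \<le> supdist f g"
  unfolding supdist_def
proof (rule cSUP_upper[OF assms(3)])
  show "bdd_above ((\<lambda>t. \<bar>f t - g t\<bar>) ` {-1..1})"
  proof (rule bdd_aboveI2)
    fix x :: real assume "x \<in> {-1..1}"
    hence "f x \<in> {-1..1}" "g x \<in> {-1..1}" using incb_maps G0_incb assms by blast+
    thus "\<bar>f x - g x\<bar> \<le> 2" by auto
  qed
qed

definition opn :: "((real \<Rightarrow> real) \<Rightarrow> bool) \<Rightarrow> bool" where
  "opn P \<longleftrightarrow> (\<forall>g\<in>G0. P g \<longrightarrow> (\<exists>e>0. \<forall>g'\<in>G0. supdist g g' < e \<longrightarrow> P g'))"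

lemma open_opn: "open_in_G0 {g\<in>G0. P g} \<longleftrightarrow> opn P"
  unfolding open_in_G0_def opn_def by auto

lemma opn_conj: "opn P \<Longrightarrow> opn R \<Longrightarrow> opn (\<lambda>g. P g \<and> R g)"
  unfolding opn_def
proof (intro ballI impI)
  fix g assume P: "\<forall>g\<in>G0. P g \<longrightarrow> (\<exists>e>0. \<forall>g'\<in>G0. supdist g g' < e \<longrightarrow> P g')"
    and R: "\<forall>g\<in>G0. R g \<longrightarrow> (\<exists>e>0. \<forall>g'\<in>G0. supdist g g' < e \<longrightarrow> R g')"
    and g: "g \<in> G0" and PR: "P g \<and> R g"
  obtain e1 where e1: "e1 > 0" "\<forall>g'\<in>G0. supdist g g' < e1 \<longrightarrow> P g'" using P g PR by blast
  obtain e2 where e2: "e2 > 0" "\<forall>g'\<in>G0. supdist g g' < e2 \<longrightarrow> R g'" using R g PR by blast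
  show "\<exists>e>0. \<forall>g'\<in>G0. supdist g g' < e \<longrightarrow> P g' \<and> R g'"
    by (rule exI[of _ "min e1 e2"]) (use e1 e2 in auto)
qed

lemma opn_true: "opn (\<lambda>g. True)"
  unfolding opn_def by (auto intro: exI[of _ 1])

lemma opn_ball: "finite I \<Longrightarrow> (\<And>i. i \<in> I \<Longrightarrow> opn (P i)) \<Longrightarrow> opn (\<lambda>g. \<forall>i\<in>I. P i g)"
proof (induction I rule: finite_induct)
  case empty then show ?case using opn_true by simp
next
  case (insert a I)
  have "opn (\<lambda>g. P a g \<and> (\<forall>i\<in>I. P i g))" by (rule opn_conj) (use insert in auto)
  thus ?case by simp
qed

lemma opn_if: "opn A \<Longrightarrow> opn B \<Longrightarrow> opn (\<lambda>g. if c then A g else B g)"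
  by (cases c) auto

lemma Q_cont:
  assumes g: "g \<in> G0" and g': "g' \<in> G0" and p: "p \<in> G0"
  shows "\<bar>Q g p - Q g' p\<bar> \<le> 2 * supdist g g'"
proof -
  have pi: "incb p" by (rule G0_incb[OF p])
  have i1: "(\<lambda>t. g (iv p t)) integrable_on {-1..1}" "(\<lambda>t. g' (iv p t)) integrable_on {-1..1}"
    by (rule integrable_continuous_real, rule cont_comp_iv[OF pi G0_cont], simp add: g g')+
  have "Q g p - Q g' p = integral {-1..1} (\<lambda>t. g (iv p t) - g' (iv p t))"
    unfolding Q_incb using integral_diff[OF i1] by simp
  moreover have "norm (integral {-1..1} (\<lambda>t. g (iv p t) - g' (iv p t))) \<le> integral {-1..1} (\<lambda>t::real. supdist g g')"
  proof (rule Henstock_Kurzweil_Integration.integral_norm_bound_integral)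
    show "(\<lambda>t. g (iv p t) - g' (iv p t)) integrable_on {-1..1}" using i1 by (rule integrable_diff)
    show "(\<lambda>t::real. supdist g g') integrable_on {-1..1}" by (rule integrable_const_ivl)
    fix t :: real assume "t \<in> {-1..1}"
    thus "norm (g (iv p t) - g' (iv p t)) \<le> supdist g g'"
      using sd_lb[OF g g' iv_maps[OF pi]] by simp
  qed
  ultimately show ?thesis by (simp add: content_real)
qed

lemma opn_Qpos: "p \<in> G0 \<Longrightarrow> opn (\<lambda>g. Q g p > 0)"
  unfolding opn_def
proof (intro ballI impI)
  fix g assume p: "p \<in> G0" and g: "g \<in> G0" and pos: "Q g p > 0"
  show "\<exists>e>0. \<forall>g'\<in>G0. supdist g g' < e \<longrightarrow> Q g' p > 0"
  proof (intro exI[of _ "Q g p / 2"] conjI ballI impI)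
    show "Q g p / 2 > 0" using pos by simp
    fix g' assume g': "g' \<in> G0" and d: "supdist g g' < Q g p / 2"
    show "Q g' p > 0" using Q_cont[OF g g' p] d by linarith
  qed
qed

lemma opn_Qneg: "p \<in> G0 \<Longrightarrow> opn (\<lambda>g. Q g p < 0)"
  unfolding opn_def
proof (intro ballI impI)
  fix g assume p: "p \<in> G0" and g: "g \<in> G0" and neg: "Q g p < 0"
  show "\<exists>e>0. \<forall>g'\<in>G0. supdist g g' < e \<longrightarrow> Q g' p < 0"
  proof (intro exI[of _ "- Q g p / 2"] conjI ballI impI)
    show "- Q g p / 2 > 0" using neg by simp
    fix g' assume g': "g' \<in> G0" and d: "supdist g g' < - Q g p / 2"
    show "Q g' p < 0" using Q_cont[OF g g' p] d by linarith
  qed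
qed

lemma opn_Qnz: "p \<in> G0 \<Longrightarrow> opn (\<lambda>g. Q g p \<noteq> 0)"
proof -
  assume p: "p \<in> G0"
  have "opn (\<lambda>g. Q g p > 0)" "opn (\<lambda>g. Q g p < 0)" using opn_Qpos[OF p] opn_Qneg[OF p] by auto
  show ?thesis unfolding opn_def
  proof (intro ballI impI)
    fix g assume g: "g \<in> G0" and nz: "Q g p \<noteq> 0"
    show "\<exists>e>0. \<forall>g'\<in>G0. supdist g g' < e \<longrightarrow> Q g' p \<noteq> 0"
    proof (cases "Q g p > 0")
      case True
      then obtain e where e: "e > 0" "\<forall>g'\<in>G0. supdist g g' < e \<longrightarrow> Q g' p > 0"
        using \<open>opn (\<lambda>g. Q g p > 0)\<close> g unfolding opn_def by blast
      show ?thesis by (rule exI[of _ e]) (use e in force)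
    next
      case False
      hence "Q g p < 0" using nz by simp
      then obtain e where e: "e > 0" "\<forall>g'\<in>G0. supdist g g' < e \<longrightarrow> Q g' p < 0"
        using \<open>opn (\<lambda>g. Q g p < 0)\<close> g unfolding opn_def by blast
      show ?thesis by (rule exI[of _ e]) (use e in force)
    qed
  qed
qed

lemma opn_NS:
  assumes K: "finite K" and pc: "\<And>k. k \<in> K \<Longrightarrow> continuous_on {-1..1} (p k)" and ind: "indepK K p"
  shows "opn (\<lambda>g. \<not> inspan K p g)"
  unfolding opn_def
proof (intro ballI impI)
  fix g assume g: "g \<in> G0" and N: "\<not> inspan K p g"
  obtain e where e: "e > 0" "\<forall>u'. (\<forall>t\<in>{-1..1}. \<bar>g t - u' t\<bar> < e) \<longrightarrow> \<not> inspan K p u'"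
    using open_notspan[OF K pc ind G0_cont[OF g] N] by blast
  show "\<exists>e>0. \<forall>g'\<in>G0. supdist g g' < e \<longrightarrow> \<not> inspan K p g'"
  proof (intro exI[of _ e] conjI ballI impI)
    fix g' assume g': "g' \<in> G0" and d: "supdist g g' < e"
    have "\<forall>t\<in>{-1..1}. \<bar>g t - g' t\<bar> < e" using sd_lb[OF g g'] d by (meson le_less_trans)
    thus "\<not> inspan K p g'" using e by blast
  qed (rule e(1))
qed

lemma opn_NSp:
  assumes K: "finite K" and pc: "\<And>k. k \<in> K \<Longrightarrow> continuous_on {-1..1} (p k)" and ind: "indepK K p"
  shows "opn (\<lambda>g. \<not> inspan K p (even_part g))"
  unfolding opn_def
proof (intro ballI impI)
  fix g assume g: "g \<in> G0" and N: "\<not> inspan K p (even_part g)"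
  obtain e where e: "e > 0" "\<forall>u'. (\<forall>t\<in>{-1..1}. \<bar>even_part g t - u' t\<bar> < e) \<longrightarrow> \<not> inspan K p u'"
    using open_notspan[OF K pc ind even_part_cont[OF G0_cont[OF g]] N] by blast
  show "\<exists>e>0. \<forall>g'\<in>G0. supdist g g' < e \<longrightarrow> \<not> inspan K p (even_part g')"
  proof (intro exI[of _ e] conjI ballI impI)
    fix g' assume g': "g' \<in> G0" and d: "supdist g g' < e"
    have "\<forall>t\<in>{-1..1}. \<bar>even_part g t - even_part g' t\<bar> < e"
    proof
      fix t :: real assume t: "t \<in> {-1..1}"
      have "-t \<in> {-1..1}" using t by auto
      hence "\<bar>g t - g' t\<bar> < e" "\<bar>g (-t) - g' (-t)\<bar> < e"
        using sd_lb[OF g g', of t] sd_lb[OF g g', of "-t"] d t by linarith+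
      moreover have "even_part g t - even_part g' t = ((g t - g' t) + (g (-t) - g' (-t))) / 2"
        unfolding even_part_def by (simp add: field_simps)
      ultimately show "\<bar>even_part g t - even_part g' t\<bar> < e" by (simp add: abs_less_iff)
    qed
    thus "\<not> inspan K p (even_part g')" using e by blast
  qed (rule e(1))
qed

lemma conv_G0:
  assumes a: "a \<in> G0" and b: "b \<in> G0" and s: "0 \<le> s" "s \<le> 1"
  shows "(\<lambda>t. (1 - s) * a t + s * b t) \<in> G0"
proof -
  let ?c = "\<lambda>t. (1 - s) * a t + s * b t"
  have ai: "incb a" and bi: "incb b" using G0_incb a b by auto
  have cc: "continuous_on {-1..1} ?c" using G0_cont[OF a] G0_cont[OF b] by (intro continuous_intros)
  have cm: "strict_mono_on {-1..1} ?c"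
  proof (rule strict_mono_onI)
    fix x y :: real assume xy: "x \<in> {-1..1}" "y \<in> {-1..1}" "x < y"
    have ax: "a x < a y" and bx: "b x < b y" using incb_less_iff[OF ai xy(1,2)] incb_less_iff[OF bi xy(1,2)] xy(3) by auto
    show "?c x < ?c y"
    proof (cases "s < 1")
      case True
      have "(1 - s) * a x < (1 - s) * a y" using ax True by simp
      moreover have "s * b x \<le> s * b y" using bx s by (simp add: mult_left_mono)
      ultimately show ?thesis by simp
    next
      case False
      hence "s = 1" using s by simp
      thus ?thesis using bx by simp
    qed
  qed
  have ends: "?c (-1) = -1" "?c 1 = 1" using ai bi unfolding incb_def by (auto simp: algebra_simps)
  have ci: "incb ?c" unfolding incb_def using cc cm ends by simp
  have out: "\<forall>t. t \<notin> {-1..1} \<longrightarrow> ?c t = t"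
    using a b unfolding G0_def Gset_def by (auto simp: algebra_simps)
  have ac: "continuous_on {-1..1} a" and bc: "continuous_on {-1..1} b" using G0_cont a b by auto
  have "integral {-1..1} ?c = (1 - s) * integral {-1..1} a + s * integral {-1..1} b"
    by (subst integral_add) (auto intro!: integrable_continuous_real continuous_intros ac bc)
  also have "\<dots> = 0" using G0_int a b by simp
  finally show ?thesis unfolding G0_def Gset_def using cc cm ends out incb_maps[OF ci] by auto
qed

lemma Q_conv:
  assumes a: "a \<in> G0" and b: "b \<in> G0" and p: "p \<in> G0"
  shows "Q (\<lambda>t. (1 - s) * a t + s * b t) p = (1 - s) * Q a p + s * Q b p"
proof -
  have pi: "incb p" by (rule G0_incb[OF p])
  have ac: "continuous_on {-1..1} (\<lambda>t. a (iv p t))" and bc: "continuous_on {-1..1} (\<lambda>t. b (iv p t))"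
    using cont_comp_iv[OF pi G0_cont] a b by auto
  show ?thesis unfolding Q_incb
    by (subst integral_add) (auto intro!: integrable_continuous_real continuous_intros ac bc)
qed

lemma sd_conv:
  assumes a: "a \<in> G0" and b: "b \<in> G0" and s: "0 \<le> s"
  shows "supdist a (\<lambda>t. (1 - s) * a t + s * b t) \<le> 2 * s"
proof (rule sd_ub)
  fix t :: real assume t: "t \<in> {-1..1}"
  have "a t \<in> {-1..1}" "b t \<in> {-1..1}" using incb_maps G0_incb a b t by blast+
  hence "\<bar>a t - b t\<bar> \<le> 2" by auto
  moreover have "\<bar>a t - ((1 - s) * a t + s * b t)\<bar> = s * \<bar>a t - b t\<bar>"
  proof -
    have "a t - ((1 - s) * a t + s * b t) = s * (a t - b t)" by (simp add: algebra_simps)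
    thus ?thesis using s by (simp add: abs_mult)
  qed
  ultimately show "\<bar>a t - ((1 - s) * a t + s * b t)\<bar> \<le> 2 * s" using s by (simp add: mult_left_mono mult.commute)
qed

lemma even_conv: "even_part (\<lambda>t. (1 - s) * a t + s * b t) = (\<lambda>t. (1 - s) * even_part a t + s * even_part b t)"
  by (auto simp: even_part_def field_simps)

lemma subsing_finite: "(\<And>x y. P x \<Longrightarrow> P y \<Longrightarrow> x = y) \<Longrightarrow> finite {x. P x}"
proof (cases "\<exists>x. P x")
  case True
  assume u: "\<And>x y. P x \<Longrightarrow> P y \<Longrightarrow> x = y"
  then obtain x where "P x" using True by blast
  hence "{x. P x} \<subseteq> {x}" using u by blast
  thus ?thesis using finite_subset by blast
qed simp

lemma pick: "finite B \<Longrightarrow> (0::real) < m \<Longrightarrow> \<exists>s. 0 < s \<and> s < m \<and> s \<notin> B"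
proof -
  assume B: "finite B" and m: "0 < m"
  have "infinite ({0<..<m} - B)" using Diff_infinite_finite[OF B] m by simp
  hence "{0<..<m} - B \<noteq> {}" by (metis finite.emptyI)
  thus ?thesis by auto
qed

lemma Qzero_subsing:
  assumes "(B::real) \<noteq> 0" "(1 - s) * A + s * B = 0" "(1 - s') * A + s' * B = 0"
  shows "s = s'"
proof (rule ccontr)
  assume ne: "s \<noteq> s'"
  have "(s - s') * (B - A) = 0" using assms(2,3) by (simp add: algebra_simps)
  hence "B = A" using ne by simp
  thus False using assms(1,2) by (simp add: algebra_simps)
qed


lemma seg_pick:
  assumes a: "a \<in> G0" and b: "b \<in> G0" and B: "finite B" and e: "e > 0"
    and P: "\<forall>g'\<in>G0. supdist a g' < e \<longrightarrow> P g'"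
    and N: "\<And>s. s \<notin> B \<Longrightarrow> 0 < s \<Longrightarrow> s < 1 \<Longrightarrow> N (\<lambda>t. (1 - s) * a t + s * b t)"
  shows "\<exists>g\<in>G0. P g \<and> N g \<and> supdist a g < e"
proof -
  obtain s where s: "0 < s" "s < min 1 (e / 2)" "s \<notin> B" using pick[OF B, of "min 1 (e/2)"] e by auto
  let ?g = "\<lambda>t. (1 - s) * a t + s * b t"
  have gG: "?g \<in> G0" by (rule conv_G0[OF a b]) (use s in auto)
  have "supdist a ?g \<le> 2 * s" by (rule sd_conv[OF a b]) (use s in auto)
  also have "\<dots> < e" using s by auto
  finally have d: "supdist a ?g < e" .
  show ?thesis using gG d P N[OF s(3) s(1)] s by auto
qed

theorem theorem4p11:
  fixes n :: nat and f :: "nat \<Rightarrow> real \<Rightarrow> real" and R :: "(nat \<times> nat) set"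
  assumes fgen: "f \<in> GEN n"
    and tour: "tournament {1..n+1} R"
    and restr: "R \<inter> ({1..n} \<times> {1..n}) = Rel n f"
  shows
    "(open_in_G0 {g \<in> G0. f(n+1 := g) \<in> GEN (n+1)}
        \<and> dense_in_G0 {g \<in> G0. f(n+1 := g) \<in> GEN (n+1)})
   \<and> (f \<in> GENp n \<longrightarrow>
        open_in_G0 {g \<in> G0. f(n+1 := g) \<in> GENp (n+1)}
        \<and> dense_in_G0 {g \<in> G0. f(n+1 := g) \<in> GENp (n+1)})
   \<and> (open_in_G0 {g \<in> G0. f(n+1 := g) \<in> GEN (n+1) \<and> Rel (n+1) (f(n+1 := g)) = R}
        \<and> {g \<in> G0. f(n+1 := g) \<in> GEN (n+1) \<and> Rel (n+1) (f(n+1 := g)) = R} \<noteq> {})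
   \<and> (f \<in> GENp n \<longrightarrow>
        open_in_G0 {g \<in> G0. f(n+1 := g) \<in> GENp (n+1) \<and> Rel (n+1) (f(n+1 := g)) = R}
        \<and> {g \<in> G0. f(n+1 := g) \<in> GENp (n+1) \<and> Rel (n+1) (f(n+1 := g)) = R} \<noteq> {})"
proof -
  have G: "\<forall>k\<in>{1..n}. f k \<in> G0" by (rule GEN_G0[OF fgen])
  define NS where "NS = (\<lambda>g. \<not> inspan {0..n} (Phi n f) g)"
  define NSp where "NSp = (\<lambda>g. \<not> inspan {1..n} (\<lambda>k. even_part (f k)) (even_part g))"
  define Qnz where "Qnz = (\<lambda>g. \<forall>i\<in>{1..n}. Q g (f i) \<noteq> 0)"
  define sg where "sg = (\<lambda>g. \<forall>i\<in>{1..n}. if (i, n+1) \<in> R then Q g (f i) > 0 else Q g (f i) < 0)"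
  have sgQ: "sg g \<Longrightarrow> Qnz g" for g unfolding sg_def Qnz_def by (metis less_irrefl)
  have RelIff: "g \<in> G0 \<Longrightarrow> (Qnz g \<and> Rel (n+1) (f(n+1 := g)) = R) \<longleftrightarrow> sg g" for g
  proof
    assume g: "g \<in> G0" and A: "Qnz g \<and> Rel (n+1) (f(n+1 := g)) = R"
    hence "\<forall>i\<in>{1..n}. (Q g (f i) > 0 \<longleftrightarrow> (i, n+1) \<in> R)"
      using Rel_ext[OF G g tour restr] unfolding Qnz_def by blast
    thus "sg g" using A unfolding sg_def Qnz_def by (metis linorder_neqE_linordered_idom)
  next
    assume g: "g \<in> G0" and s: "sg g"
    have q: "Qnz g" by (rule sgQ[OF s])
    have "\<forall>i\<in>{1..n}. (Q g (f i) > 0 \<longleftrightarrow> (i, n+1) \<in> R)"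
      using s unfolding sg_def by (metis less_asym)
    hence "Rel (n+1) (f(n+1 := g)) = R" using Rel_ext[OF G g tour restr] q unfolding Qnz_def by blast
    thus "Qnz g \<and> Rel (n+1) (f(n+1 := g)) = R" using q by simp
  qed
  have S1: "{g \<in> G0. f(n+1 := g) \<in> GEN (n+1)} = {g \<in> G0. NS g \<and> Qnz g}"
    using GEN_ext[OF fgen] unfolding NS_def Qnz_def by blast
  have S3: "{g \<in> G0. f(n+1 := g) \<in> GEN (n+1) \<and> Rel (n+1) (f(n+1 := g)) = R} = {g \<in> G0. NS g \<and> sg g}"
  proof -
    have "\<And>g. g \<in> G0 \<Longrightarrow> (f(n+1 := g) \<in> GEN (n+1) \<and> Rel (n+1) (f(n+1 := g)) = R) \<longleftrightarrow> NS g \<and> sg g"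
    proof -
      fix g assume g: "g \<in> G0"
      have e1: "f(n+1 := g) \<in> GEN (n+1) \<longleftrightarrow> NS g \<and> Qnz g" using GEN_ext[OF fgen g] unfolding NS_def Qnz_def .
      show "(f(n+1 := g) \<in> GEN (n+1) \<and> Rel (n+1) (f(n+1 := g)) = R) \<longleftrightarrow> NS g \<and> sg g"
        using e1 RelIff[OF g] by blast
    qed
    thus ?thesis by blast
  qed
  have oNS: "opn NS" unfolding NS_def
    by (rule opn_NS[OF _ _ GEN_indep[OF fgen]]) (use Phi_cont[OF G] in auto)
  have oQnz: "opn Qnz" unfolding Qnz_def by (rule opn_ball) (use opn_Qnz G in auto)
  have osg: "opn sg" unfolding sg_def
  proof (rule opn_ball)
    fix i assume i: "i \<in> {1..n}"
    hence fi: "f i \<in> G0" using G by blast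
    show "opn (\<lambda>g. if (i, n+1) \<in> R then Q g (f i) > 0 else Q g (f i) < 0)"
      by (rule opn_if[OF opn_Qpos[OF fi] opn_Qneg[OF fi]])
  qed simp
  have ne3: "\<exists>g\<in>G0. NS g \<and> sg g"
  proof -
    obtain b1 \<delta> where b1: "b1 \<in> G0" "\<delta> > 0"
      and Qb1: "\<forall>i\<in>{1..n}. Q b1 (f i) = \<delta> * (if (i, n+1) \<in> R then 1 else -1)"
      using construct[OF fgen, of "\<lambda>i. if (i, n+1) \<in> R then 1 else -1"] by blast
    have sb1: "sg b1" unfolding sg_def using Qb1 b1(2) by auto
    obtain e where e: "e > 0" "\<forall>g'\<in>G0. supdist b1 g' < e \<longrightarrow> sg g'"
      using osg b1 sb1 unfolding opn_def by blast
    obtain b2 where b2: "b2 \<in> G0" "NS b2" using exists_NS[OF fgen] unfolding NS_def by blast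
    let ?B = "{s. inspan {0..n} (Phi n f) (\<lambda>t. (1 - s) * b1 t + s * b2 t)}"
    have fin: "finite ?B"
      by (rule subsing_finite) (use seg_unique b2(2) in \<open>auto simp: NS_def\<close>)
    have "\<exists>g\<in>G0. sg g \<and> NS g \<and> supdist b1 g < e"
      by (rule seg_pick[OF b1(1) b2(1) fin e]) (auto simp: NS_def)
    thus ?thesis by blast
  qed
  have dense1: "dense_in_G0 {g \<in> G0. NS g \<and> Qnz g}"
    unfolding dense_in_G0_def
  proof (intro ballI allI impI)
    fix g0 e assume g0: "g0 \<in> G0" and e: "(e::real) > 0"
    obtain b where b: "b \<in> G0" "NS b" "sg b" using ne3 by blast
    have bQ: "Qnz b" by (rule sgQ[OF b(3)])
    let ?c = "\<lambda>s t. (1 - s) * g0 t + s * b t"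
    let ?B = "{s. inspan {0..n} (Phi n f) (?c s)} \<union> (\<Union>i\<in>{1..n}. {s. Q (?c s) (f i) = 0})"
    have fin: "finite ?B"
    proof (rule finite_UnI)
      show "finite {s. inspan {0..n} (Phi n f) (?c s)}"
        by (rule subsing_finite) (use seg_unique b(2) in \<open>auto simp: NS_def\<close>)
      show "finite (\<Union>i\<in>{1..n}. {s. Q (?c s) (f i) = 0})"
      proof (rule finite_UN_I)
        fix i assume i: "i \<in> {1..n}"
        show "finite {s. Q (?c s) (f i) = 0}"
        proof (rule subsing_finite)
          fix s s' assume "Q (?c s) (f i) = 0" "Q (?c s') (f i) = 0"
          thus "s = s'" using Q_conv[OF g0 b(1)] G i bQ unfolding Qnz_def
            by (intro Qzero_subsing[of "Q b (f i)" s "Q g0 (f i)" s']) auto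
        qed
      qed simp
    qed
    have "\<exists>g\<in>G0. True \<and> (NS g \<and> Qnz g) \<and> supdist g0 g < e"
    proof (rule seg_pick[OF g0 b(1) fin e])
      fix s assume s: "s \<notin> ?B"
      show "NS (?c s) \<and> Qnz (?c s)" using s unfolding NS_def Qnz_def by blast
    qed simp
    thus "\<exists>g\<in>{g \<in> G0. NS g \<and> Qnz g}. supdist g0 g < e" by blast
  qed
  have part1: "open_in_G0 {g \<in> G0. f(n+1 := g) \<in> GEN (n+1)} \<and> dense_in_G0 {g \<in> G0. f(n+1 := g) \<in> GEN (n+1)}"
    unfolding S1 open_opn using opn_conj[OF oNS oQnz] dense1 by simp
  have part3: "open_in_G0 {g \<in> G0. f(n+1 := g) \<in> GEN (n+1) \<and> Rel (n+1) (f(n+1 := g)) = R}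
        \<and> {g \<in> G0. f(n+1 := g) \<in> GEN (n+1) \<and> Rel (n+1) (f(n+1 := g)) = R} \<noteq> {}"
    unfolding S3 open_opn using opn_conj[OF oNS osg] ne3 by auto
  have partp: "open_in_G0 {g \<in> G0. f(n+1 := g) \<in> GENp (n+1)}
        \<and> dense_in_G0 {g \<in> G0. f(n+1 := g) \<in> GENp (n+1)}
      \<and> open_in_G0 {g \<in> G0. f(n+1 := g) \<in> GENp (n+1) \<and> Rel (n+1) (f(n+1 := g)) = R}
        \<and> {g \<in> G0. f(n+1 := g) \<in> GENp (n+1) \<and> Rel (n+1) (f(n+1 := g)) = R} \<noteq> {}"
    if fp: "f \<in> GENp n"
  proof -
    have S2: "{g \<in> G0. f(n+1 := g) \<in> GENp (n+1)} = {g \<in> G0. NSp g \<and> Qnz g}"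
      using GENp_ext[OF fp] unfolding NSp_def Qnz_def by blast
    have S4: "{g \<in> G0. f(n+1 := g) \<in> GENp (n+1) \<and> Rel (n+1) (f(n+1 := g)) = R} = {g \<in> G0. NSp g \<and> sg g}"
    proof -
      have "\<And>g. g \<in> G0 \<Longrightarrow> (f(n+1 := g) \<in> GENp (n+1) \<and> Rel (n+1) (f(n+1 := g)) = R) \<longleftrightarrow> NSp g \<and> sg g"
      proof -
        fix g assume g: "g \<in> G0"
        have e1: "f(n+1 := g) \<in> GENp (n+1) \<longleftrightarrow> NSp g \<and> Qnz g" using GENp_ext[OF fp g] unfolding NSp_def Qnz_def .
        show "(f(n+1 := g) \<in> GENp (n+1) \<and> Rel (n+1) (f(n+1 := g)) = R) \<longleftrightarrow> NSp g \<and> sg g"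
          using e1 RelIff[OF g] by blast
      qed
      thus ?thesis by blast
    qed
    have pc: "\<And>k. k \<in> {1..n} \<Longrightarrow> continuous_on {-1..1} (even_part (f k))"
      using G G0_cont even_part_cont by blast
    have oNSp: "opn NSp" unfolding NSp_def
      by (rule opn_NSp[OF _ pc GENp_indep[OF fp]]) auto
    have ne4: "\<exists>g\<in>G0. NSp g \<and> sg g"
    proof -
      obtain b1 \<delta> where b1: "b1 \<in> G0" "\<delta> > 0"
        and Qb1: "\<forall>i\<in>{1..n}. Q b1 (f i) = \<delta> * (if (i, n+1) \<in> R then 1 else -1)"
        using construct[OF fgen, of "\<lambda>i. if (i, n+1) \<in> R then 1 else -1"] by blast
      have sb1: "sg b1" unfolding sg_def using Qb1 b1(2) by auto
      obtain e where e: "e > 0" "\<forall>g'\<in>G0. supdist b1 g' < e \<longrightarrow> sg g'"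
        using osg b1 sb1 unfolding opn_def by blast
      obtain b2 where b2: "b2 \<in> G0" "NSp b2" using exists_NSp[OF fp] unfolding NSp_def by blast
      let ?B = "{s. inspan {1..n} (\<lambda>k. even_part (f k)) (\<lambda>t. (1 - s) * even_part b1 t + s * even_part b2 t)}"
      have fin: "finite ?B"
        by (rule subsing_finite) (use seg_unique b2(2) in \<open>auto simp: NSp_def\<close>)
      have "\<exists>g\<in>G0. sg g \<and> NSp g \<and> supdist b1 g < e"
        by (rule seg_pick[OF b1(1) b2(1) fin e]) (auto simp: NSp_def even_conv)
      thus ?thesis by blast
    qed
    have dense2: "dense_in_G0 {g \<in> G0. NSp g \<and> Qnz g}"
      unfolding dense_in_G0_def
    proof (intro ballI allI impI)
      fix g0 e assume g0: "g0 \<in> G0" and e: "(e::real) > 0"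
      obtain b where b: "b \<in> G0" "NSp b" "sg b" using ne4 by blast
      have bQ: "Qnz b" by (rule sgQ[OF b(3)])
      let ?c = "\<lambda>s t. (1 - s) * g0 t + s * b t"
      let ?B = "{s. inspan {1..n} (\<lambda>k. even_part (f k)) (\<lambda>t. (1 - s) * even_part g0 t + s * even_part b t)}
                 \<union> (\<Union>i\<in>{1..n}. {s. Q (?c s) (f i) = 0})"
      have fin: "finite ?B"
      proof (rule finite_UnI)
        show "finite {s. inspan {1..n} (\<lambda>k. even_part (f k)) (\<lambda>t. (1 - s) * even_part g0 t + s * even_part b t)}"
          by (rule subsing_finite) (use seg_unique b(2) in \<open>auto simp: NSp_def\<close>)
        show "finite (\<Union>i\<in>{1..n}. {s. Q (?c s) (f i) = 0})"
        proof (rule finite_UN_I)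
          fix i assume i: "i \<in> {1..n}"
          show "finite {s. Q (?c s) (f i) = 0}"
          proof (rule subsing_finite)
            fix s s' assume "Q (?c s) (f i) = 0" "Q (?c s') (f i) = 0"
            thus "s = s'" using Q_conv[OF g0 b(1)] G i bQ unfolding Qnz_def
              by (intro Qzero_subsing[of "Q b (f i)" s "Q g0 (f i)" s']) auto
          qed
        qed simp
      qed
      have "\<exists>g\<in>G0. True \<and> (NSp g \<and> Qnz g) \<and> supdist g0 g < e"
      proof (rule seg_pick[OF g0 b(1) fin e])
        fix s assume s: "s \<notin> ?B"
        show "NSp (?c s) \<and> Qnz (?c s)" using s unfolding NSp_def Qnz_def even_conv by blast
      qed simp
      thus "\<exists>g\<in>{g \<in> G0. NSp g \<and> Qnz g}. supdist g0 g < e" by blast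
    qed
    show ?thesis unfolding S2 S4 open_opn using opn_conj[OF oNSp oQnz] opn_conj[OF oNSp osg] dense2 ne4 by auto
  qed
  show ?thesis using part1 part3 partp by blast
qed


end
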